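(* Let $N\ge1$, $T>0$, and consider the problem of minimizing $\int_0^T\mathbb V(t)\,dt$, $\mathbb V=\frac1N\sum_{i=1}^N\xi_i^2$, over $\alpha\in\mathcal U$, where $\dot\xi_i=-\xi_i+(1-\alpha_i)\bar\xi$, $\bar\xi=\frac1N\sum_j\xi_j$, with initial datum satisfying $\bar\xi(0)>0$ and $\xi_1(0)\ge\dots\ge\xi_N(0)$. Then there exists an optimal control whose trajectory satisfies: for all $t\in[0,T]$ and all $i<j$, $\xi_i(t)\ge\xi_j(t)$.
   Context: $\mathcal U$ is the set of measurable $\alpha:[0,T]\to[0,1]^N$ with $\sum_i\alpha_i(t)\le1$ for all $t$. *)

theory Defs
  imports "HOL-Analysis.Analysis"
begin

text \<open>States are vectors indexed by 0..N-1, encoded as nat \<Rightarrow> real.\<close>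

definition mean :: "nat \<Rightarrow> (nat \<Rightarrow> real) \<Rightarrow> real" where
  "mean N x = (1 / real N) * (\<Sum>j<N. x j)"

definition Vfun :: "nat \<Rightarrow> (nat \<Rightarrow> real) \<Rightarrow> real" where
  "Vfun N x = (1 / real N) * (\<Sum>i<N. (x i)^2)"

definition admissible :: "nat \<Rightarrow> real \<Rightarrow> (real \<Rightarrow> nat \<Rightarrow> real) \<Rightarrow> bool" where
  "admissible N T \<alpha> \<longleftrightarrow>
     (\<forall>i<N. (\<lambda>t. \<alpha> t i) \<in> borel_measurable (lebesgue_on {0..T})) \<and>
     (\<forall>t\<in>{0..T}. (\<forall>i<N. 0 \<le> \<alpha> t i \<and> \<alpha> t i \<le> 1) \<and> (\<Sum>i<N. \<alpha> t i) \<le> 1)"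

text \<open>Carath\'eodory (integral-form) solution of
  xi_i' = - xi_i + (1 - alpha_i) * mean xi on [0,T], xi(0) = xi0.\<close>
definition is_traj :: "nat \<Rightarrow> real \<Rightarrow> (nat \<Rightarrow> real) \<Rightarrow> (real \<Rightarrow> nat \<Rightarrow> real)
                        \<Rightarrow> (real \<Rightarrow> nat \<Rightarrow> real) \<Rightarrow> bool" where
  "is_traj N T \<xi>0 \<alpha> \<xi> \<longleftrightarrow>
     (\<forall>i<N. continuous_on {0..T} (\<lambda>t. \<xi> t i)) \<and>
     (\<forall>i<N. \<forall>t\<in>{0..T}.
        ((\<lambda>s. - \<xi> s i + (1 - \<alpha> s i) * mean N (\<xi> s)) has_integral (\<xi> t i - \<xi>0 i)) {0..t})"

definition cost :: "nat \<Rightarrow> real \<Rightarrow> (real \<Rightarrow> nat \<Rightarrow> real) \<Rightarrow> real" where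
  "cost N T \<xi> = integral {0..T} (\<lambda>t. Vfun N (\<xi> t))"

end

theory Submission
  imports Defs "HOL-Complex_Analysis.Great_Picard"
begin


definition fint :: "nat \<Rightarrow> (real \<Rightarrow> nat \<Rightarrow> real) \<Rightarrow> (real \<Rightarrow> nat \<Rightarrow> real) \<Rightarrow> nat \<Rightarrow> real \<Rightarrow> real" where
  "fint N \<alpha> \<xi> i s = - \<xi> s i + (1 - \<alpha> s i) * mean N (\<xi> s)"

lemma traj_has_int:
  assumes "is_traj N T \<xi>0 \<alpha> \<xi>" "i < N" "t \<in> {0..T}"
  shows "(fint N \<alpha> \<xi> i has_integral (\<xi> t i - \<xi>0 i)) {0..t}"
  using assms unfolding is_traj_def fint_def by blast

lemma traj_cont:
  assumes "is_traj N T \<xi>0 \<alpha> \<xi>" "i < N"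
  shows "continuous_on {0..T} (\<lambda>t. \<xi> t i)"
  using assms unfolding is_traj_def by blast

lemma traj0:
  assumes "is_traj N T \<xi>0 \<alpha> \<xi>" "i < N" "T \<ge> 0"
  shows "\<xi> 0 i = \<xi>0 i"
proof -
  have h: "(fint N \<alpha> \<xi> i has_integral (\<xi> 0 i - \<xi>0 i)) {0..0}"
    by (rule traj_has_int[OF assms(1,2)]) (use assms(3) in simp)
  have "integral {0..0} (fint N \<alpha> \<xi> i) = 0" by simp
  then show ?thesis using integral_unique[OF h] by simp
qed

lemma traj_diff:
  assumes "is_traj N T \<xi>0 \<alpha> \<xi>" "i < N" "0 \<le> a" "a \<le> b" "b \<le> T"
  shows "fint N \<alpha> \<xi> i integrable_on {a..b}"
    and "\<xi> b i - \<xi> a i = integral {a..b} (fint N \<alpha> \<xi> i)"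
proof -
  have hb: "(fint N \<alpha> \<xi> i has_integral (\<xi> b i - \<xi>0 i)) {0..b}"
    using traj_has_int[OF assms(1,2)] assms by auto
  have ha: "(fint N \<alpha> \<xi> i has_integral (\<xi> a i - \<xi>0 i)) {0..a}"
    using traj_has_int[OF assms(1,2)] assms by auto
  have ib: "fint N \<alpha> \<xi> i integrable_on {0..b}" using hb by blast
  show "fint N \<alpha> \<xi> i integrable_on {a..b}"
    by (rule integrable_subinterval_real[OF ib]) (use assms in auto)
  have "integral {0..a} (fint N \<alpha> \<xi> i) + integral {a..b} (fint N \<alpha> \<xi> i) = integral {0..b} (fint N \<alpha> \<xi> i)"
    using Henstock_Kurzweil_Integration.integral_combine[of 0 a b "fint N \<alpha> \<xi> i"] assms ib by simp
  then show "\<xi> b i - \<xi> a i = integral {a..b} (fint N \<alpha> \<xi> i)"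
    using integral_unique[OF ha] integral_unique[OF hb] by linarith
qed

lemma mean_cont:
  assumes "is_traj N T \<xi>0 \<alpha> \<xi>"
  shows "continuous_on {0..T} (\<lambda>t. mean N (\<xi> t))"
  unfolding mean_def
  by (intro continuous_intros) (use traj_cont[OF assms] in auto)

lemma mean_integrand:
  assumes "N \<ge> 1"
  shows "(1 / real N) * (\<Sum>i<N. fint N \<alpha> \<xi> i s) = - ((\<Sum>i<N. \<alpha> s i) / real N) * mean N (\<xi> s)"
proof -
  have "(\<Sum>i<N. fint N \<alpha> \<xi> i s) = - (\<Sum>i<N. \<xi> s i) + (real N - (\<Sum>i<N. \<alpha> s i)) * mean N (\<xi> s)"
    by (simp add: fint_def sum.distrib sum_distrib_right sum_subtractf sum_negf sum_distrib_left algebra_simps)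
  moreover have "(\<Sum>i<N. \<xi> s i) = real N * mean N (\<xi> s)"
    using assms by (simp add: mean_def)
  ultimately show ?thesis using assms by (simp add: field_simps)
qed

lemma mean_diff:
  assumes "is_traj N T \<xi>0 \<alpha> \<xi>" "N \<ge> 1" "0 \<le> a" "a \<le> b" "b \<le> T"
  shows "(\<lambda>s. - ((\<Sum>i<N. \<alpha> s i) / real N) * mean N (\<xi> s)) integrable_on {a..b}"
    and "mean N (\<xi> b) - mean N (\<xi> a) = integral {a..b} (\<lambda>s. - ((\<Sum>i<N. \<alpha> s i) / real N) * mean N (\<xi> s))"
proof -
  have int: "\<And>i. i \<in> {..<N} \<Longrightarrow> fint N \<alpha> \<xi> i integrable_on {a..b}"
    using traj_diff(1)[OF assms(1) _ assms(3-5)] by auto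
  have i2: "(\<lambda>s. (1 / real N) * (\<Sum>i<N. fint N \<alpha> \<xi> i s)) integrable_on {a..b}"
    using integrable_on_cmult_left[OF integrable_sum[of "{..<N}" "\<lambda>i. fint N \<alpha> \<xi> i", OF _ int], of "1 / real N"] by simp
  have "mean N (\<xi> b) - mean N (\<xi> a) = (1 / real N) * (\<Sum>i<N. \<xi> b i - \<xi> a i)"
    by (simp add: mean_def sum_subtractf algebra_simps)
  also have "\<dots> = (1 / real N) * (\<Sum>i<N. integral {a..b} (fint N \<alpha> \<xi> i))"
    using traj_diff(2)[OF assms(1) _ assms(3-5)] by simp
  also have "\<dots> = integral {a..b} (\<lambda>s. (1 / real N) * (\<Sum>i<N. fint N \<alpha> \<xi> i s))"
  proof -
    have "(\<Sum>i<N. integral {a..b} (fint N \<alpha> \<xi> i)) = integral {a..b} (\<lambda>s. \<Sum>i<N. fint N \<alpha> \<xi> i s)"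
      by (rule integral_sum[symmetric]) (use int in auto)
    then show ?thesis by simp
  qed
  finally have e: "mean N (\<xi> b) - mean N (\<xi> a) = integral {a..b} (\<lambda>s. (1 / real N) * (\<Sum>i<N. fint N \<alpha> \<xi> i s))" .
  have fe: "(\<lambda>s. (1 / real N) * (\<Sum>i<N. fint N \<alpha> \<xi> i s)) = (\<lambda>s. - ((\<Sum>i<N. \<alpha> s i) / real N) * mean N (\<xi> s))"
    using mean_integrand[OF assms(2)] by auto
  show "(\<lambda>s. - ((\<Sum>i<N. \<alpha> s i) / real N) * mean N (\<xi> s)) integrable_on {a..b}"
    using i2 unfolding fe .
  show "mean N (\<xi> b) - mean N (\<xi> a) = integral {a..b} (\<lambda>s. - ((\<Sum>i<N. \<alpha> s i) / real N) * mean N (\<xi> s))"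
    using e unfolding fe .
qed




lemma adm_bounds:
  assumes "admissible N T \<alpha>" "s \<in> {0..T}"
  shows "\<And>i. i < N \<Longrightarrow> 0 \<le> \<alpha> s i" "\<And>i. i < N \<Longrightarrow> \<alpha> s i \<le> 1"
    "(\<Sum>i<N. \<alpha> s i) \<le> 1" "0 \<le> (\<Sum>i<N. \<alpha> s i)"
proof -
  show "\<And>i. i < N \<Longrightarrow> 0 \<le> \<alpha> s i" "\<And>i. i < N \<Longrightarrow> \<alpha> s i \<le> 1" "(\<Sum>i<N. \<alpha> s i) \<le> 1"
    using assms unfolding admissible_def by auto
  then show "0 \<le> (\<Sum>i<N. \<alpha> s i)" by (intro sum_nonneg) auto
qed

lemma mean_mono_step:
  assumes tr: "is_traj N T \<xi>0 \<alpha> \<xi>" and adm: "admissible N T \<alpha>" and N: "N \<ge> 1"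
    and ab: "0 \<le> a" "a \<le> b" "b \<le> T" and nn: "\<forall>s\<in>{a..b}. mean N (\<xi> s) \<ge> 0"
  shows "mean N (\<xi> b) \<le> mean N (\<xi> a)"
proof -
  let ?h = "\<lambda>s. - ((\<Sum>i<N. \<alpha> s i) / real N) * mean N (\<xi> s)"
  have "integral {a..b} ?h \<le> integral {a..b} (\<lambda>s. 0::real)"
  proof (rule integral_le)
    show "?h integrable_on {a..b}" by (rule mean_diff(1)[OF tr N ab])
    show "(\<lambda>s. 0::real) integrable_on {a..b}" by (rule integrable_0)
    fix s assume s: "s \<in> {a..b}"
    then have "0 \<le> (\<Sum>i<N. \<alpha> s i)" using adm_bounds(4)[OF adm, of s] ab by auto
    moreover have "mean N (\<xi> s) \<ge> 0" using nn s by auto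
    ultimately show "?h s \<le> 0" by (simp add: mult_nonneg_nonneg)
  qed
  then show ?thesis using mean_diff(2)[OF tr N ab] by simp
qed

lemma mean_lower_step:
  assumes tr: "is_traj N T \<xi>0 \<alpha> \<xi>" and adm: "admissible N T \<alpha>" and N: "N \<ge> 1"
    and ab: "0 \<le> a" "a \<le> b" "b \<le> T" and nn: "\<forall>s\<in>{a..b}. mean N (\<xi> s) \<ge> 0"
  shows "mean N (\<xi> b) \<ge> mean N (\<xi> a) - (b - a) / real N * mean N (\<xi> a)"
proof -
  let ?h = "\<lambda>s. - ((\<Sum>i<N. \<alpha> s i) / real N) * mean N (\<xi> s)"
  let ?c = "- (1 / real N) * mean N (\<xi> a)"
  have "integral {a..b} (\<lambda>s. ?c) \<le> integral {a..b} ?h"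
  proof (rule integral_le)
    show "?h integrable_on {a..b}" by (rule mean_diff(1)[OF tr N ab])
    show "(\<lambda>s. ?c) integrable_on {a..b}" by (rule integrable_const_ivl)
    fix s assume s: "s \<in> {a..b}"
    then have s1: "(\<Sum>i<N. \<alpha> s i) \<le> 1" using adm_bounds(3)[OF adm, of s] ab by auto
    have s0: "0 \<le> (\<Sum>i<N. \<alpha> s i)" using adm_bounds(4)[OF adm, of s] ab s by auto
    have m0: "mean N (\<xi> s) \<ge> 0" using nn s by auto
    have ms: "mean N (\<xi> s) \<le> mean N (\<xi> a)"
      by (rule mean_mono_step[OF tr adm N]) (use s ab nn in auto)
    have "((\<Sum>i<N. \<alpha> s i) / real N) * mean N (\<xi> s) \<le> (1 / real N) * mean N (\<xi> s)"
      using s1 m0 N by (intro mult_right_mono divide_right_mono) auto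
    also have "\<dots> \<le> (1 / real N) * mean N (\<xi> a)"
      using ms N by (intro mult_left_mono) auto
    finally show "?c \<le> ?h s" by simp
  qed
  moreover have "integral {a..b} (\<lambda>s. ?c) = (b - a) * ?c" using ab by simp
  ultimately have I: "(b - a) * ?c \<le> integral {a..b} ?h" by (simp only:)
  have E: "mean N (\<xi> b) - mean N (\<xi> a) = integral {a..b} ?h" by (rule mean_diff(2)[OF tr N ab])
  have "(b - a) / real N * mean N (\<xi> a) = - ((b - a) * ?c)" by simp
  then show ?thesis using I E by linarith
qed

lemma mean_pos:
  assumes tr: "is_traj N T \<xi>0 \<alpha> \<xi>" and adm: "admissible N T \<alpha>" and N: "N \<ge> 1"
    and T: "T \<ge> 0" and m0: "mean N \<xi>0 > 0"
  shows "\<forall>t\<in>{0..T}. mean N (\<xi> t) > 0"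
proof (rule ccontr)
  let ?g = "\<lambda>t. mean N (\<xi> t)"
  assume "\<not> ?thesis"
  then obtain t where t: "t \<in> {0..T}" "?g t \<le> 0" by force
  have g0: "?g 0 = mean N \<xi>0"
    using traj0[OF tr _ T] by (simp add: mean_def)
  have cont: "continuous_on {0..T} ?g" by (rule mean_cont[OF tr])
  define S where "S = {0..T} \<inter> ?g -` {..0}"
  have clS: "closed S" unfolding S_def
    by (rule continuous_closed_preimage[OF cont]) auto
  have tS: "t \<in> S" using t by (auto simp: S_def)
  have bdd: "bdd_below S" by (auto simp: S_def bdd_below_def)
  define t1 where "t1 = Inf S"
  have t1S: "t1 \<in> S" unfolding t1_def using closed_contains_Inf[OF _ bdd clS] tS by auto
  have t1: "0 \<le> t1" "t1 \<le> T" "?g t1 \<le> 0" using t1S by (auto simp: S_def)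
  have below: "\<And>s. s \<in> {0..<t1} \<Longrightarrow> ?g s > 0"
  proof -
    fix s assume s: "s \<in> {0..<t1}"
    show "?g s > 0"
    proof (rule ccontr)
      assume "\<not> ?g s > 0"
      then have "s \<in> S" using s t1 by (auto simp: S_def)
      then have "t1 \<le> s" unfolding t1_def by (rule cInf_lower[OF _ bdd])
      then show False using s by auto
    qed
  qed
  have "t1 \<noteq> 0" using t1 g0 m0 by auto
  then have t1pos: "0 < t1" using t1 by auto
  have gt1: "?g t1 = 0"
  proof (rule ccontr)
    assume ne: "?g t1 \<noteq> 0"
    have "\<exists>x\<ge>0. x \<le> t1 \<and> ?g x = 0"
      by (rule IVT2') (use t1 g0 m0 ne in \<open>auto intro: continuous_on_subset[OF cont]\<close>)
    then obtain x where x: "0 \<le> x" "x \<le> t1" "?g x = 0" by blast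
    then have "x \<in> S" using t1 by (auto simp: S_def)
    then have "t1 \<le> x" unfolding t1_def by (rule cInf_lower[OF _ bdd])
    then show False using x ne by auto
  qed
  define d where "d = min t1 (real N / 2)"
  have d: "0 < d" "d \<le> t1" "d \<le> real N / 2" using t1pos N by (auto simp: d_def)
  define a where "a = t1 - d"
  have a: "0 \<le> a" "a < t1" using d by (auto simp: a_def)
  have nn: "\<forall>s\<in>{a..t1}. ?g s \<ge> 0"
    using below gt1 a by (metis atLeastAtMost_iff atLeastLessThan_iff less_eq_real_def order.trans)
  have ga: "?g a > 0" using below a by auto
  have "?g t1 \<ge> ?g a - (t1 - a) / real N * ?g a"
    by (rule mean_lower_step[OF tr adm N]) (use a t1 nn in auto)
  moreover have "(t1 - a) / real N \<le> 1 / 2" using d N by (simp add: a_def field_simps)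
  then have "(t1 - a) / real N * ?g a \<le> 1/2 * ?g a" using ga by (intro mult_right_mono) auto
  ultimately have "?g t1 \<ge> ?g a / 2" by linarith
  then show False using ga gt1 by linarith
qed




lemma mean_props:
  assumes tr: "is_traj N T \<xi>0 \<alpha> \<xi>" and adm: "admissible N T \<alpha>" and N: "N \<ge> 1"
    and T: "T \<ge> 0" and m0: "mean N \<xi>0 > 0"
  shows "\<And>a b. 0 \<le> a \<Longrightarrow> a \<le> b \<Longrightarrow> b \<le> T \<Longrightarrow> mean N (\<xi> b) \<le> mean N (\<xi> a)"
    and "\<And>t. t \<in> {0..T} \<Longrightarrow> 0 < mean N (\<xi> t)"
    and "\<And>t. t \<in> {0..T} \<Longrightarrow> mean N (\<xi> t) \<le> mean N \<xi>0"
proof -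
  have pos: "\<forall>t\<in>{0..T}. mean N (\<xi> t) > 0" by (rule mean_pos[OF assms])
  then show "\<And>t. t \<in> {0..T} \<Longrightarrow> 0 < mean N (\<xi> t)" by blast
  show mono: "\<And>a b. 0 \<le> a \<Longrightarrow> a \<le> b \<Longrightarrow> b \<le> T \<Longrightarrow> mean N (\<xi> b) \<le> mean N (\<xi> a)"
  proof (rule mean_mono_step[OF tr adm N])
    fix a b assume "0 \<le> a" "a \<le> b" "b \<le> T"
    then show "\<forall>s\<in>{a..b}. 0 \<le> mean N (\<xi> s)" using pos by (meson atLeastAtMost_iff less_eq_real_def order_trans)
  qed
  have g0: "mean N (\<xi> 0) = mean N \<xi>0"
    using traj0[OF tr _ T] by (simp add: mean_def)
  show "\<And>t. t \<in> {0..T} \<Longrightarrow> mean N (\<xi> t) \<le> mean N \<xi>0"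
    using mono[of 0] g0 by auto
qed

lemma upper_gen:
  fixes g :: "real \<Rightarrow> real"
  assumes cont: "continuous_on {0..t} g" and t: "0 \<le> t" and g0: "g 0 \<le> K"
    and step: "\<And>a b. 0 \<le> a \<Longrightarrow> a \<le> b \<Longrightarrow> b \<le> t \<Longrightarrow> (\<forall>s\<in>{a..b}. K \<le> g s) \<Longrightarrow> g b \<le> g a"
  shows "g t \<le> K"
proof (rule ccontr)
  assume "\<not> g t \<le> K"
  then have gt: "g t > K" by simp
  define S where "S = {0..t} \<inter> g -` {..K}"
  have clS: "closed S" unfolding S_def
    by (rule continuous_closed_preimage[OF cont]) auto
  have 0: "0 \<in> S" using t g0 by (auto simp: S_def)
  have bdd: "bdd_above S" by (auto simp: S_def bdd_above_def)
  define s1 where "s1 = Sup S"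
  have s1S: "s1 \<in> S" unfolding s1_def using closed_contains_Sup[OF _ bdd clS] 0 by auto
  have s1: "0 \<le> s1" "s1 \<le> t" "g s1 \<le> K" using s1S by (auto simp: S_def)
  have "\<exists>x\<ge>s1. x \<le> t \<and> g x = K"
    by (rule IVT') (use s1 gt in \<open>auto intro: continuous_on_subset[OF cont]\<close>)
  then obtain x where x: "s1 \<le> x" "x \<le> t" "g x = K" by blast
  then have "x \<in> S" using s1 by (auto simp: S_def)
  then have "x \<le> s1" unfolding s1_def by (rule cSup_upper[OF _ bdd])
  then have gs1: "g s1 = K" using x by auto
  have above: "\<forall>s\<in>{s1..t}. K \<le> g s"
  proof
    fix s assume s: "s \<in> {s1..t}"
    show "K \<le> g s"
    proof (rule ccontr)
      assume "\<not> K \<le> g s"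
      then have "s \<in> S" using s s1 by (auto simp: S_def)
      then have "s \<le> s1" unfolding s1_def by (rule cSup_upper[OF _ bdd])
      then have "s = s1" using s by auto
      then show False using gs1 \<open>\<not> K \<le> g s\<close> by auto
    qed
  qed
  have "g t \<le> g s1" by (rule step) (use s1 above in auto)
  then show False using gs1 gt by auto
qed

lemma traj_bound:
  assumes tr: "is_traj N T \<xi>0 \<alpha> \<xi>" and adm: "admissible N T \<alpha>" and N: "N \<ge> 1"
    and T: "T \<ge> 0" and m0: "mean N \<xi>0 > 0" and i: "i < N" and t: "t \<in> {0..T}"
  shows "\<bar>\<xi> t i\<bar> \<le> \<bar>\<xi>0 i\<bar> + mean N \<xi>0"
proof -
  note mp = mean_props[OF tr adm N T m0]
  have cont: "continuous_on {0..t} (\<lambda>s. \<xi> s i)"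
    using continuous_on_subset[OF traj_cont[OF tr i]] t by auto
  have x0: "\<xi> 0 i = \<xi>0 i" by (rule traj0[OF tr i T])
  have up: "\<xi> t i \<le> max (\<xi>0 i) (mean N \<xi>0)"
  proof (rule upper_gen[OF cont])
    show "0 \<le> t" using t by auto
    show "\<xi> 0 i \<le> max (\<xi>0 i) (mean N \<xi>0)" using x0 by simp
    fix a b assume ab: "0 \<le> a" "a \<le> b" "b \<le> t" and K: "\<forall>s\<in>{a..b}. max (\<xi>0 i) (mean N \<xi>0) \<le> \<xi> s i"
    have ab': "b \<le> T" using ab t by auto
    have "integral {a..b} (fint N \<alpha> \<xi> i) \<le> integral {a..b} (\<lambda>s. 0::real)"
    proof (rule integral_le)
      show "fint N \<alpha> \<xi> i integrable_on {a..b}" by (rule traj_diff(1)[OF tr i ab(1,2) ab'])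
      show "(\<lambda>s. 0::real) integrable_on {a..b}" by (rule integrable_0)
      fix s assume s: "s \<in> {a..b}"
      then have sT: "s \<in> {0..T}" using ab ab' by auto
      have "(1 - \<alpha> s i) * mean N (\<xi> s) \<le> 1 * mean N (\<xi> s)"
        using adm_bounds(1)[OF adm sT i] mp(2)[OF sT] by (intro mult_right_mono) auto
      moreover have "max (\<xi>0 i) (mean N \<xi>0) \<le> \<xi> s i" using K s by blast
      ultimately show "fint N \<alpha> \<xi> i s \<le> 0"
        using mp(3)[OF sT] by (auto simp: fint_def)
    qed
    then show "\<xi> b i \<le> \<xi> a i" using traj_diff(2)[OF tr i ab(1,2) ab'] by simp
  qed
  have lo: "- \<xi> t i \<le> max (- \<xi>0 i) 0"
  proof (rule upper_gen[where g = "\<lambda>s. - \<xi> s i"])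
    show "continuous_on {0..t} (\<lambda>s. - \<xi> s i)" using cont by (intro continuous_intros)
    show "0 \<le> t" using t by auto
    show "- \<xi> 0 i \<le> max (- \<xi>0 i) 0" using x0 by simp
    fix a b assume ab: "0 \<le> a" "a \<le> b" "b \<le> t" and K: "\<forall>s\<in>{a..b}. max (- \<xi>0 i) 0 \<le> - \<xi> s i"
    have ab': "b \<le> T" using ab t by auto
    have "integral {a..b} (\<lambda>s. 0::real) \<le> integral {a..b} (fint N \<alpha> \<xi> i)"
    proof (rule integral_le)
      show "fint N \<alpha> \<xi> i integrable_on {a..b}" by (rule traj_diff(1)[OF tr i ab(1,2) ab'])
      show "(\<lambda>s. 0::real) integrable_on {a..b}" by (rule integrable_0)
      fix s assume s: "s \<in> {a..b}"
      then have sT: "s \<in> {0..T}" using ab ab' by auto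
      have "0 \<le> (1 - \<alpha> s i) * mean N (\<xi> s)"
        using adm_bounds(2)[OF adm sT i] mp(2)[OF sT] by (intro mult_nonneg_nonneg) auto
      moreover have "max (- \<xi>0 i) 0 \<le> - \<xi> s i" using K s by blast
      ultimately show "0 \<le> fint N \<alpha> \<xi> i s"
        by (auto simp: fint_def)
    qed
    then show "- \<xi> b i \<le> - \<xi> a i" using traj_diff(2)[OF tr i ab(1,2) ab'] by simp
  qed
  show ?thesis using up lo m0 by auto
qed

definition Bnd :: "nat \<Rightarrow> (nat \<Rightarrow> real) \<Rightarrow> real" where
  "Bnd N \<xi>0 = (\<Sum>k<N. \<bar>\<xi>0 k\<bar>) + mean N \<xi>0"

lemma traj_bound2:
  assumes tr: "is_traj N T \<xi>0 \<alpha> \<xi>" and adm: "admissible N T \<alpha>" and N: "N \<ge> 1"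
    and T: "T \<ge> 0" and m0: "mean N \<xi>0 > 0" and i: "i < N" and t: "t \<in> {0..T}"
  shows "\<bar>\<xi> t i\<bar> \<le> Bnd N \<xi>0"
proof -
  have "\<bar>\<xi>0 i\<bar> \<le> (\<Sum>k<N. \<bar>\<xi>0 k\<bar>)"
    using i by (intro member_le_sum) auto
  then show ?thesis using traj_bound[OF assms] by (simp add: Bnd_def)
qed

lemma Bnd_ge: "mean N \<xi>0 \<le> Bnd N \<xi>0"
  unfolding Bnd_def by (simp add: sum_nonneg)

lemma fint_bound:
  assumes tr: "is_traj N T \<xi>0 \<alpha> \<xi>" and adm: "admissible N T \<alpha>" and N: "N \<ge> 1"
    and T: "T \<ge> 0" and m0: "mean N \<xi>0 > 0" and i: "i < N" and s: "s \<in> {0..T}"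
  shows "\<bar>fint N \<alpha> \<xi> i s\<bar> \<le> 2 * Bnd N \<xi>0"
proof -
  note mp = mean_props[OF tr adm N T m0]
  have a: "\<bar>\<xi> s i\<bar> \<le> Bnd N \<xi>0" by (rule traj_bound2[OF assms])
  have "\<bar>(1 - \<alpha> s i) * mean N (\<xi> s)\<bar> \<le> 1 * mean N \<xi>0"
    using adm_bounds(1,2)[OF adm s i] mp(2,3)[OF s] unfolding abs_mult
    by (intro mult_mono) auto
  then show ?thesis using a Bnd_ge[of N \<xi>0] unfolding fint_def by linarith
qed

lemma traj_lip:
  assumes tr: "is_traj N T \<xi>0 \<alpha> \<xi>" and adm: "admissible N T \<alpha>" and N: "N \<ge> 1"
    and T: "T \<ge> 0" and m0: "mean N \<xi>0 > 0" and i: "i < N"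
    and ab: "0 \<le> a" "a \<le> b" "b \<le> T"
  shows "\<bar>\<xi> b i - \<xi> a i\<bar> \<le> 2 * Bnd N \<xi>0 * (b - a)"
proof -
  have "norm (integral {a..b} (fint N \<alpha> \<xi> i)) \<le> integral {a..b} (\<lambda>s. 2 * Bnd N \<xi>0)"
  proof (rule integral_norm_bound_integral)
    show "fint N \<alpha> \<xi> i integrable_on {a..b}" by (rule traj_diff(1)[OF tr i ab])
    show "(\<lambda>s. 2 * Bnd N \<xi>0) integrable_on {a..b}" by (rule integrable_const_ivl)
    fix s assume "s \<in> {a..b}"
    then have "s \<in> {0..T}" using ab by auto
    then show "norm (fint N \<alpha> \<xi> i s) \<le> 2 * Bnd N \<xi>0"
      using fint_bound[OF tr adm N T m0 i] by simp
  qed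
  moreover have "integral {a..b} (\<lambda>s. 2 * Bnd N \<xi>0) = 2 * Bnd N \<xi>0 * (b - a)" using ab by simp
  ultimately show ?thesis using traj_diff(2)[OF tr i ab] by (simp only: real_norm_def)
qed




definition midA :: "nat \<Rightarrow> (real \<Rightarrow> nat \<Rightarrow> real) \<Rightarrow> (real \<Rightarrow> nat \<Rightarrow> real) \<Rightarrow> (real \<Rightarrow> nat \<Rightarrow> real) \<Rightarrow> (real \<Rightarrow> nat \<Rightarrow> real) \<Rightarrow> real \<Rightarrow> nat \<Rightarrow> real" where
  "midA N \<alpha> \<xi> \<beta> \<eta> = (\<lambda>t i. (\<alpha> t i * mean N (\<xi> t) + \<beta> t i * mean N (\<eta> t)) / (mean N (\<xi> t) + mean N (\<eta> t)))"

definition midX :: "(real \<Rightarrow> nat \<Rightarrow> real) \<Rightarrow> (real \<Rightarrow> nat \<Rightarrow> real) \<Rightarrow> real \<Rightarrow> nat \<Rightarrow> real" where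
  "midX \<xi> \<eta> = (\<lambda>t i. (\<xi> t i + \<eta> t i) / 2)"

lemma mean_midX: "mean N (midX \<xi> \<eta> t) = (mean N (\<xi> t) + mean N (\<eta> t)) / 2"
  by (cases "N = 0") (simp_all add: mean_def midX_def sum.distrib sum_divide_distrib[symmetric] field_simps)

lemma mean_meas:
  assumes "is_traj N T \<xi>0 \<alpha> \<xi>"
  shows "(\<lambda>t. mean N (\<xi> t)) \<in> borel_measurable (lebesgue_on {0..T})"
  by (rule continuous_imp_measurable_on_sets_lebesgue[OF mean_cont[OF assms]]) auto

lemma adm_meas:
  assumes "admissible N T \<alpha>" "i < N"
  shows "(\<lambda>t. \<alpha> t i) \<in> borel_measurable (lebesgue_on {0..T})"
  using assms unfolding admissible_def by blast

lemma mid_feas: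
  assumes N: "N \<ge> 1" and T: "T \<ge> 0" and m0: "mean N \<xi>0 > 0"
    and a1: "admissible N T \<alpha>" and t1: "is_traj N T \<xi>0 \<alpha> \<xi>"
    and a2: "admissible N T \<beta>" and t2: "is_traj N T \<xi>0 \<beta> \<eta>"
  shows "admissible N T (midA N \<alpha> \<xi> \<beta> \<eta>)" and "is_traj N T \<xi>0 (midA N \<alpha> \<xi> \<beta> \<eta>) (midX \<xi> \<eta>)"
proof -
  note mp1 = mean_props[OF t1 a1 N T m0]
  note mp2 = mean_props[OF t2 a2 N T m0]
  have ms1[measurable]: "(\<lambda>t. mean N (\<xi> t)) \<in> borel_measurable (lebesgue_on {0..T})" by (rule mean_meas[OF t1])
  have ms2[measurable]: "(\<lambda>t. mean N (\<eta> t)) \<in> borel_measurable (lebesgue_on {0..T})" by (rule mean_meas[OF t2])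
  show "admissible N T (midA N \<alpha> \<xi> \<beta> \<eta>)"
    unfolding admissible_def
  proof (intro conjI)
    show "\<forall>i<N. (\<lambda>t. midA N \<alpha> \<xi> \<beta> \<eta> t i) \<in> borel_measurable (lebesgue_on {0..T})"
    proof (intro allI impI)
    fix i assume i: "i < N"
    have [measurable]: "(\<lambda>t. \<alpha> t i) \<in> borel_measurable (lebesgue_on {0..T})" by (rule adm_meas[OF a1 i])
    have [measurable]: "(\<lambda>t. \<beta> t i) \<in> borel_measurable (lebesgue_on {0..T})" by (rule adm_meas[OF a2 i])
    show "(\<lambda>t. midA N \<alpha> \<xi> \<beta> \<eta> t i) \<in> borel_measurable (lebesgue_on {0..T})"
      unfolding midA_def by measurable
    qed
  next
    show "\<forall>t\<in>{0..T}. (\<forall>i<N. 0 \<le> midA N \<alpha> \<xi> \<beta> \<eta> t i \<and> midA N \<alpha> \<xi> \<beta> \<eta> t i \<le> 1) \<and> (\<Sum>i<N. midA N \<alpha> \<xi> \<beta> \<eta> t i) \<le> 1"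
    proof (intro ballI conjI)
    fix t assume t: "t \<in> {0..T}"
    define p where "p = mean N (\<xi> t)"
    define q where "q = mean N (\<eta> t)"
    have p: "p > 0" and q: "q > 0" using mp1(2)[OF t] mp2(2)[OF t] by (auto simp: p_def q_def)
    show "\<forall>i<N. 0 \<le> midA N \<alpha> \<xi> \<beta> \<eta> t i \<and> midA N \<alpha> \<xi> \<beta> \<eta> t i \<le> 1"
    proof (intro allI impI conjI)
      fix i assume i: "i < N"
      have b: "0 \<le> \<alpha> t i" "\<alpha> t i \<le> 1" "0 \<le> \<beta> t i" "\<beta> t i \<le> 1"
        using adm_bounds[OF a1 t] adm_bounds[OF a2 t] i by auto
      show "0 \<le> midA N \<alpha> \<xi> \<beta> \<eta> t i" unfolding midA_def p_def[symmetric] q_def[symmetric]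
        using b p q by (intro divide_nonneg_pos add_nonneg_nonneg mult_nonneg_nonneg) auto
      have "\<alpha> t i * p + \<beta> t i * q \<le> 1 * p + 1 * q"
        using b p q by (intro add_mono mult_right_mono) auto
      then show "midA N \<alpha> \<xi> \<beta> \<eta> t i \<le> 1" unfolding midA_def p_def[symmetric] q_def[symmetric]
        using p q by (simp add: divide_le_eq)
    qed
    have "(\<Sum>i<N. midA N \<alpha> \<xi> \<beta> \<eta> t i) = ((\<Sum>i<N. \<alpha> t i) * p + (\<Sum>i<N. \<beta> t i) * q) / (p + q)"
      unfolding midA_def p_def[symmetric] q_def[symmetric]
      by (simp add: sum_divide_distrib[symmetric] sum.distrib sum_distrib_right)
    also have "\<dots> \<le> 1"
    proof -
      have "(\<Sum>i<N. \<alpha> t i) * p + (\<Sum>i<N. \<beta> t i) * q \<le> 1 * p + 1 * q"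
        using adm_bounds(3)[OF a1 t] adm_bounds(3)[OF a2 t] p q by (intro add_mono mult_right_mono) auto
      then show ?thesis using p q by (simp add: divide_le_eq)
    qed
    finally show "(\<Sum>i<N. midA N \<alpha> \<xi> \<beta> \<eta> t i) \<le> 1" .
    qed
  qed
  show "is_traj N T \<xi>0 (midA N \<alpha> \<xi> \<beta> \<eta>) (midX \<xi> \<eta>)"
    unfolding is_traj_def
  proof (intro conjI allI impI ballI)
    fix i assume i: "i < N"
    show "continuous_on {0..T} (\<lambda>t. midX \<xi> \<eta> t i)"
      unfolding midX_def using traj_cont[OF t1 i] traj_cont[OF t2 i] by (intro continuous_intros) auto
    fix t assume t: "t \<in> {0..T}"
    have h1: "(fint N \<alpha> \<xi> i has_integral (\<xi> t i - \<xi>0 i)) {0..t}" by (rule traj_has_int[OF t1 i t])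
    have h2: "(fint N \<beta> \<eta> i has_integral (\<eta> t i - \<xi>0 i)) {0..t}" by (rule traj_has_int[OF t2 i t])
    have h: "((\<lambda>s. (fint N \<alpha> \<xi> i s + fint N \<beta> \<eta> i s) / 2) has_integral ((\<xi> t i - \<xi>0 i) + (\<eta> t i - \<xi>0 i)) / 2) {0..t}"
      using has_integral_add[OF h1 h2] by (intro has_integral_divide) auto
    have eq: "(\<lambda>s. (fint N \<alpha> \<xi> i s + fint N \<beta> \<eta> i s) / 2) s = - midX \<xi> \<eta> s i + (1 - midA N \<alpha> \<xi> \<beta> \<eta> s i) * mean N (midX \<xi> \<eta> s)"
      if s: "s \<in> {0..t}" for s
    proof -
      have sT: "s \<in> {0..T}" using s t by auto
      define p where "p = mean N (\<xi> s)"
      define q where "q = mean N (\<eta> s)"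
      have p: "p > 0" and q: "q > 0" using mp1(2)[OF sT] mp2(2)[OF sT] by (auto simp: p_def q_def)
      have mm: "mean N (midX \<xi> \<eta> s) = (p + q) / 2" by (simp add: mean_midX p_def q_def)
      show ?thesis
        unfolding mm
        unfolding midA_def fint_def p_def[symmetric] q_def[symmetric] midX_def
        using p q by (simp add: field_simps)
    qed
    have "((\<lambda>s. - midX \<xi> \<eta> s i + (1 - midA N \<alpha> \<xi> \<beta> \<eta> s i) * mean N (midX \<xi> \<eta> s)) has_integral ((\<xi> t i - \<xi>0 i) + (\<eta> t i - \<xi>0 i)) / 2) {0..t}"
      by (rule has_integral_eq[OF _ h]) (use eq in auto)
    moreover have "((\<xi> t i - \<xi>0 i) + (\<eta> t i - \<xi>0 i)) / 2 = midX \<xi> \<eta> t i - \<xi>0 i"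
      by (simp add: midX_def field_simps)
    ultimately show "((\<lambda>s. - midX \<xi> \<eta> s i + (1 - midA N \<alpha> \<xi> \<beta> \<eta> s i) * mean N (midX \<xi> \<eta> s)) has_integral (midX \<xi> \<eta> t i - \<xi>0 i)) {0..t}"
      by (simp only:)
  qed
qed




lemma Vfun_cont:
  assumes "is_traj N T \<xi>0 \<alpha> \<xi>"
  shows "continuous_on {0..T} (\<lambda>t. Vfun N (\<xi> t))"
  unfolding Vfun_def
  by (intro continuous_intros) (use traj_cont[OF assms] in auto)

lemma Vfun_nonneg: "0 \<le> Vfun N x"
  unfolding Vfun_def by (simp add: sum_nonneg)

lemma Vfun_mid:
  "Vfun N (midX \<xi> \<eta> t) = (Vfun N (\<xi> t) + Vfun N (\<eta> t)) / 2 - Vfun N (\<lambda>i. \<xi> t i - \<eta> t i) / 4"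
proof -
  have "(\<Sum>i<N. (midX \<xi> \<eta> t i)^2) = (\<Sum>i<N. ((\<xi> t i)^2 + (\<eta> t i)^2) / 2 - (\<xi> t i - \<eta> t i)^2 / 4)"
    by (rule sum.cong) (auto simp: midX_def power2_eq_square field_simps)
  also have "\<dots> = ((\<Sum>i<N. (\<xi> t i)^2) + (\<Sum>i<N. (\<eta> t i)^2)) / 2 - (\<Sum>i<N. (\<xi> t i - \<eta> t i)^2) / 4"
    by (simp add: sum_subtractf sum_divide_distrib[symmetric] sum.distrib)
  finally have e: "(\<Sum>i<N. (midX \<xi> \<eta> t i)^2) = ((\<Sum>i<N. (\<xi> t i)^2) + (\<Sum>i<N. (\<eta> t i)^2)) / 2 - (\<Sum>i<N. (\<xi> t i - \<eta> t i)^2) / 4" .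
  show ?thesis unfolding Vfun_def e by (cases "N = 0") (simp_all add: field_simps)
qed

lemma cost_mid:
  assumes t1: "is_traj N T \<xi>0 \<alpha> \<xi>" and t2: "is_traj N T \<xi>0 \<beta> \<eta>"
  shows "cost N T (midX \<xi> \<eta>) = (cost N T \<xi> + cost N T \<eta>) / 2 - integral {0..T} (\<lambda>t. Vfun N (\<lambda>i. \<xi> t i - \<eta> t i)) / 4"
proof -
  have c3: "continuous_on {0..T} (\<lambda>t. Vfun N (\<lambda>i. \<xi> t i - \<eta> t i))"
    unfolding Vfun_def
    by (intro continuous_intros) (use traj_cont[OF t1] traj_cont[OF t2] in auto)
  have i1: "(\<lambda>t. Vfun N (\<xi> t)) integrable_on {0..T}" by (rule integrable_continuous_interval[OF Vfun_cont[OF t1]])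
  have i2: "(\<lambda>t. Vfun N (\<eta> t)) integrable_on {0..T}" by (rule integrable_continuous_interval[OF Vfun_cont[OF t2]])
  have i3: "(\<lambda>t. Vfun N (\<lambda>i. \<xi> t i - \<eta> t i)) integrable_on {0..T}" by (rule integrable_continuous_interval[OF c3])
  have "cost N T (midX \<xi> \<eta>) = integral {0..T} (\<lambda>t. (Vfun N (\<xi> t) + Vfun N (\<eta> t)) / 2 - Vfun N (\<lambda>i. \<xi> t i - \<eta> t i) / 4)"
    unfolding cost_def Vfun_mid ..
  also have "\<dots> = integral {0..T} (\<lambda>t. (Vfun N (\<xi> t) + Vfun N (\<eta> t)) / 2) - integral {0..T} (\<lambda>t. Vfun N (\<lambda>i. \<xi> t i - \<eta> t i) / 4)"
    by (rule integral_diff) (use i1 i2 i3 in \<open>auto intro: integrable_add integrable_on_divide\<close>)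
  also have "integral {0..T} (\<lambda>t. (Vfun N (\<xi> t) + Vfun N (\<eta> t)) / 2) = (cost N T \<xi> + cost N T \<eta>) / 2"
    unfolding cost_def using integral_add[OF i1 i2] by simp
  also have "integral {0..T} (\<lambda>t. Vfun N (\<lambda>i. \<xi> t i - \<eta> t i) / 4) = integral {0..T} (\<lambda>t. Vfun N (\<lambda>i. \<xi> t i - \<eta> t i)) / 4"
    by simp
  finally show ?thesis .
qed

lemma cost_nonneg:
  assumes "is_traj N T \<xi>0 \<alpha> \<xi>"
  shows "0 \<le> cost N T \<xi>"
  unfolding cost_def
  by (rule integral_nonneg[OF integrable_continuous_interval[OF Vfun_cont[OF assms]]]) (simp add: Vfun_nonneg)

lemma opt_unique:
  assumes N: "N \<ge> 1" and T: "T > 0" and m0: "mean N \<xi>0 > 0"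
    and a1: "admissible N T \<alpha>" and t1: "is_traj N T \<xi>0 \<alpha> \<xi>"
    and a2: "admissible N T \<beta>" and t2: "is_traj N T \<xi>0 \<beta> \<eta>"
    and opt: "\<forall>\<beta> \<eta>. admissible N T \<beta> \<and> is_traj N T \<xi>0 \<beta> \<eta> \<longrightarrow> cost N T \<xi> \<le> cost N T \<eta>"
    and ceq: "cost N T \<eta> = cost N T \<xi>"
  shows "\<forall>t\<in>{0..T}. \<forall>k<N. \<eta> t k = \<xi> t k"
proof -
  let ?D = "\<lambda>t. Vfun N (\<lambda>i. \<xi> t i - \<eta> t i)"
  have c3: "continuous_on {0..T} ?D"
    unfolding Vfun_def
    by (intro continuous_intros) (use traj_cont[OF t1] traj_cont[OF t2] in auto)
  have "cost N T \<xi> \<le> cost N T (midX \<xi> \<eta>)"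
    using opt mid_feas[OF N _ m0 a1 t1 a2 t2] T by auto
  then have "integral {0..T} ?D \<le> 0" unfolding cost_mid[OF t1 t2] ceq by simp
  moreover have "0 \<le> integral {0..T} ?D"
    by (rule integral_nonneg[OF integrable_continuous_interval[OF c3]]) (simp add: Vfun_nonneg)
  ultimately have I0: "integral {0..T} ?D = 0" by simp
  have hI: "(?D has_integral 0) (cbox 0 T)"
    using integrable_integral[OF integrable_continuous_interval[OF c3]] I0 by simp
  show ?thesis
  proof (intro ballI allI impI)
    fix t k assume t: "t \<in> {0..T}" and k: "k < N"
    have "?D t = 0"
      by (rule has_integral_0_cbox_imp_0[OF _ _ hI]) (use c3 t T in \<open>auto simp: Vfun_nonneg\<close>)
    then have "(\<Sum>i<N. (\<xi> t i - \<eta> t i)^2) = 0" using N by (simp add: Vfun_def)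
    then have "\<forall>i\<in>{..<N}. (\<xi> t i - \<eta> t i)^2 = 0"
      by (subst sum_nonneg_eq_0_iff[symmetric]) auto
    then show "\<eta> t k = \<xi> t k" using k by auto
  qed
qed

definition sw :: "nat \<Rightarrow> nat \<Rightarrow> nat \<Rightarrow> nat" where
  "sw i j k = (if k = i then j else if k = j then i else k)"

lemma sw_sw[simp]: "sw i j (sw i j k) = k"
  by (auto simp: sw_def)

lemma sw_lt: "i < N \<Longrightarrow> j < N \<Longrightarrow> k < N \<Longrightarrow> sw i j k < N"
  by (auto simp: sw_def)

lemma sum_sw:
  assumes "i < N" "j < N"
  shows "(\<Sum>k<N. f (sw i j k)) = (\<Sum>k<N. (f k :: real))"
  by (rule sum.reindex_bij_witness[where i = "sw i j" and j = "sw i j"]) (use assms in \<open>auto simp: sw_lt\<close>)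

definition swX :: "nat \<Rightarrow> nat \<Rightarrow> real \<Rightarrow> (real \<Rightarrow> nat \<Rightarrow> real) \<Rightarrow> real \<Rightarrow> nat \<Rightarrow> real" where
  "swX i j t0 \<xi> = (\<lambda>t k. if t \<le> t0 then \<xi> t k else \<xi> t (sw i j k))"

lemma mean_swX: "i < N \<Longrightarrow> j < N \<Longrightarrow> mean N (swX i j t0 \<xi> t) = mean N (\<xi> t)"
  by (cases "t \<le> t0") (auto simp: mean_def swX_def sum_sw[where f = "\<xi> t"])

lemma Vfun_swX: "i < N \<Longrightarrow> j < N \<Longrightarrow> Vfun N (swX i j t0 \<xi> t) = Vfun N (\<xi> t)"
  by (cases "t \<le> t0") (auto simp: Vfun_def swX_def sum_sw[where f = "\<lambda>k. (\<xi> t k)^2"])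

lemma swap_feas:
  assumes N: "N \<ge> 1" and T: "T \<ge> 0" and m0: "mean N \<xi>0 > 0"
    and a1: "admissible N T \<alpha>" and t1: "is_traj N T \<xi>0 \<alpha> \<xi>"
    and ij: "i < N" "j < N" and t0: "t0 \<in> {0..T}" and eq: "\<xi> t0 i = \<xi> t0 j"
  shows "admissible N T (swX i j t0 \<alpha>)" and "is_traj N T \<xi>0 (swX i j t0 \<alpha>) (swX i j t0 \<xi>)"
    and "cost N T (swX i j t0 \<xi>) = cost N T \<xi>"
proof -
  have eqk: "\<xi> t0 (sw i j k) = \<xi> t0 k" for k using eq by (auto simp: sw_def)
  show "cost N T (swX i j t0 \<xi>) = cost N T \<xi>"
    unfolding cost_def Vfun_swX[OF ij] ..
  show "admissible N T (swX i j t0 \<alpha>)"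
    unfolding admissible_def
  proof (intro conjI)
    show "\<forall>k<N. (\<lambda>t. swX i j t0 \<alpha> t k) \<in> borel_measurable (lebesgue_on {0..T})"
    proof (intro allI impI)
      fix k assume k: "k < N"
      have [measurable]: "(\<lambda>t. \<alpha> t k) \<in> borel_measurable (lebesgue_on {0..T})" by (rule adm_meas[OF a1 k])
      have [measurable]: "(\<lambda>t. \<alpha> t (sw i j k)) \<in> borel_measurable (lebesgue_on {0..T})"
        by (rule adm_meas[OF a1 sw_lt[OF ij k]])
      have [measurable]: "(\<lambda>x. x) \<in> borel_measurable (lebesgue_on {0..T::real})"
        by (rule continuous_imp_measurable_on_sets_lebesgue) (auto intro: continuous_on_id)
      show "(\<lambda>t. swX i j t0 \<alpha> t k) \<in> borel_measurable (lebesgue_on {0..T})"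
        unfolding swX_def by measurable
    qed
    show "\<forall>t\<in>{0..T}. (\<forall>k<N. 0 \<le> swX i j t0 \<alpha> t k \<and> swX i j t0 \<alpha> t k \<le> 1) \<and> (\<Sum>k<N. swX i j t0 \<alpha> t k) \<le> 1"
    proof (intro ballI conjI allI impI)
      fix t k assume t: "t \<in> {0..T}" and k: "k < N"
      show "0 \<le> swX i j t0 \<alpha> t k" "swX i j t0 \<alpha> t k \<le> 1"
        using adm_bounds(1,2)[OF a1 t k] adm_bounds(1,2)[OF a1 t sw_lt[OF ij k]] by (auto simp: swX_def)
    next
      fix t assume t: "t \<in> {0..T}"
      show "(\<Sum>k<N. swX i j t0 \<alpha> t k) \<le> 1"
        using adm_bounds(3)[OF a1 t] sum_sw[OF ij, of "\<alpha> t"] by (cases "t \<le> t0") (auto simp: swX_def)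
    qed
  qed
  show "is_traj N T \<xi>0 (swX i j t0 \<alpha>) (swX i j t0 \<xi>)"
    unfolding is_traj_def
  proof (intro conjI allI impI ballI)
    fix k assume k: "k < N"
    have ksw: "sw i j k < N" by (rule sw_lt[OF ij k])
    have c1: "continuous_on {0..t0} (\<lambda>t. swX i j t0 \<xi> t k)"
      by (rule continuous_on_eq[OF continuous_on_subset[OF traj_cont[OF t1 k]]]) (use t0 in \<open>auto simp: swX_def\<close>)
    have c2: "continuous_on {t0..T} (\<lambda>t. swX i j t0 \<xi> t k)"
      by (rule continuous_on_eq[OF continuous_on_subset[OF traj_cont[OF t1 ksw]]]) (use t0 eqk in \<open>auto simp: swX_def\<close>)
    have "continuous_on ({0..t0} \<union> {t0..T}) (\<lambda>t. swX i j t0 \<xi> t k)"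
      by (rule continuous_on_closed_Un[OF _ _ c1 c2]) auto
    moreover have "{0..t0} \<union> {t0..T} = {0..T}" using t0 by auto
    ultimately show "continuous_on {0..T} (\<lambda>t. swX i j t0 \<xi> t k)" by simp
    fix t assume t: "t \<in> {0..T}"
    let ?g = "\<lambda>s. - swX i j t0 \<xi> s k + (1 - swX i j t0 \<alpha> s k) * mean N (swX i j t0 \<xi> s)"
    have gl: "?g s = fint N \<alpha> \<xi> k s" if "s \<le> t0" for s
      unfolding fint_def mean_swX[OF ij] using that by (simp add: swX_def)
    have gr: "?g s = fint N \<alpha> \<xi> (sw i j k) s" if "s > t0" for s
      unfolding fint_def mean_swX[OF ij] using that by (simp add: swX_def)
    show "(?g has_integral (swX i j t0 \<xi> t k - \<xi>0 k)) {0..t}"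
    proof (cases "t \<le> t0")
      case True
      have "(fint N \<alpha> \<xi> k has_integral (\<xi> t k - \<xi>0 k)) {0..t}" by (rule traj_has_int[OF t1 k t])
      then have "(?g has_integral (\<xi> t k - \<xi>0 k)) {0..t}"
        by (rule has_integral_eq[rotated]) (use gl True in auto)
      then show ?thesis using True by (simp add: swX_def)
    next
      case False
      have t0': "t0 \<in> {0..T}" by (rule t0)
      have h1: "(fint N \<alpha> \<xi> k has_integral (\<xi> t0 k - \<xi>0 k)) {0..t0}" by (rule traj_has_int[OF t1 k t0'])
      have h1': "(?g has_integral (\<xi> t0 k - \<xi>0 k)) {0..t0}"
        by (rule has_integral_eq[rotated, OF h1]) (use gl in auto)
      have tt: "0 \<le> t0" "t0 \<le> t" "t \<le> T" using t t0 False by auto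
      have h2: "(fint N \<alpha> \<xi> (sw i j k) has_integral (\<xi> t (sw i j k) - \<xi> t0 (sw i j k))) {t0..t}"
        using traj_diff[OF t1 ksw tt] by (simp add: has_integral_integral)
      have h2': "(?g has_integral (\<xi> t (sw i j k) - \<xi> t0 (sw i j k))) {t0..t}"
      proof (rule has_integral_spike_finite[OF _ _ h2])
        show "finite {t0}" by simp
        fix s assume "s \<in> {t0..t} - {t0}"
        then have "s > t0" by auto
        then show "?g s = fint N \<alpha> \<xi> (sw i j k) s" using gr by simp
      qed
      have "(?g has_integral ((\<xi> t0 k - \<xi>0 k) + (\<xi> t (sw i j k) - \<xi> t0 (sw i j k)))) {0..t}"
        by (rule has_integral_combine[OF tt(1,2) h1' h2'])
      then show ?thesis using False eqk[of k] by (simp add: swX_def)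
    qed
  qed
qed

lemma ordering_from_opt:
  assumes N: "N \<ge> 1" and T: "T > 0" and m0: "mean N \<xi>0 > 0"
    and ord0: "\<And>i j. i \<le> j \<Longrightarrow> j < N \<Longrightarrow> \<xi>0 j \<le> \<xi>0 i"
    and a1: "admissible N T \<alpha>" and t1: "is_traj N T \<xi>0 \<alpha> \<xi>"
    and opt: "\<forall>\<beta> \<eta>. admissible N T \<beta> \<and> is_traj N T \<xi>0 \<beta> \<eta> \<longrightarrow> cost N T \<xi> \<le> cost N T \<eta>"
  shows "\<forall>t\<in>{0..T}. \<forall>i j. i < j \<and> j < N \<longrightarrow> \<xi> t j \<le> \<xi> t i"
proof (intro ballI allI impI)
  fix t i j assume t: "t \<in> {0..T}" and ij: "i < j \<and> j < N"
  have i: "i < N" and j: "j < N" using ij by auto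
  show "\<xi> t j \<le> \<xi> t i"
  proof (rule ccontr)
    assume "\<not> \<xi> t j \<le> \<xi> t i"
    then have gt: "\<xi> t i - \<xi> t j < 0" by simp
    have g0: "0 \<le> \<xi> 0 i - \<xi> 0 j" using traj0[OF t1 i] traj0[OF t1 j] ord0[of i j] ij T by auto
    have cont: "continuous_on {0..t} (\<lambda>s. \<xi> s i - \<xi> s j)"
      using t by (intro continuous_intros continuous_on_subset[OF traj_cont[OF t1 i]] continuous_on_subset[OF traj_cont[OF t1 j]]) auto
    have "\<exists>x\<ge>0. x \<le> t \<and> \<xi> x i - \<xi> x j = 0"
      by (rule IVT2') (use g0 gt cont t in auto)
    then obtain t0 where t0: "0 \<le> t0" "t0 \<le> t" "\<xi> t0 i - \<xi> t0 j = 0" by blast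
    have t0T: "t0 \<in> {0..T}" using t0 t by auto
    have t0t: "t0 \<noteq> t" using t0 gt by auto
    note sf = swap_feas[OF N less_imp_le[OF T] m0 a1 t1 i j t0T]
    have e: "\<xi> t0 i = \<xi> t0 j" using t0 by simp
    have "\<forall>s\<in>{0..T}. \<forall>k<N. swX i j t0 \<xi> s k = \<xi> s k"
      by (rule opt_unique[OF N T m0 a1 t1 sf(1)[OF e] sf(2)[OF e] opt sf(3)[OF e]])
    then have "swX i j t0 \<xi> t i = \<xi> t i" using t i by blast
    moreover have "swX i j t0 \<xi> t i = \<xi> t j" using t0 t0t by (simp add: swX_def sw_def)
    ultimately show False using gt by simp
  qed
qed




lemma feas_nonempty:
  assumes N: "N \<ge> 1" and T: "T \<ge> 0"
  shows "admissible N T (\<lambda>t i. 0)"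
    and "is_traj N T \<xi>0 (\<lambda>t i. 0) (\<lambda>t i. mean N \<xi>0 + (\<xi>0 i - mean N \<xi>0) * exp (- t))"
proof -
  show "admissible N T (\<lambda>t i. 0)" unfolding admissible_def by auto
  let ?c = "mean N \<xi>0"
  let ?x = "\<lambda>t i. ?c + (\<xi>0 i - ?c) * exp (- t)"
  have mx: "mean N (?x t) = ?c" for t
  proof -
    have e1: "(\<Sum>i<N. ?x t i) = (\<Sum>i<N. ?c) + (\<Sum>i<N. (\<xi>0 i - ?c)) * exp (- t)"
      by (simp only: sum.distrib sum_distrib_right)
    have e2: "(\<Sum>i<N. (\<xi>0 i - ?c)) = (\<Sum>i<N. \<xi>0 i) - real N * ?c"
      by (simp add: sum_subtractf)
    have e3: "(\<Sum>i<N. \<xi>0 i) = real N * ?c" using N by (simp add: mean_def)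
    show ?thesis unfolding mean_def[of N "?x t"] e1 e2 e3 using N by simp
  qed
  show "is_traj N T \<xi>0 (\<lambda>t i. 0) ?x"
    unfolding is_traj_def
  proof (intro conjI allI impI ballI)
    fix i assume i: "i < N"
    show "continuous_on {0..T} (\<lambda>t. ?x t i)" by (intro continuous_intros)
    fix t assume t: "t \<in> {0..T}"
    have h: "((\<lambda>s. - (\<xi>0 i - ?c) * exp (- s)) has_integral ((\<xi>0 i - ?c) * exp (- t) - (\<xi>0 i - ?c) * exp (- 0))) {0..t}"
    proof (rule fundamental_theorem_of_calculus)
      show "0 \<le> t" using t by auto
      fix s assume "s \<in> {0..t}"
      show "((\<lambda>s. (\<xi>0 i - ?c) * exp (- s)) has_vector_derivative - (\<xi>0 i - ?c) * exp (- s)) (at s within {0..t})"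
      proof -
        have d: "((\<lambda>s. (\<xi>0 i - ?c) * exp (- s)) has_real_derivative ((\<xi>0 i - ?c) * (exp (- s) * (- 1)))) (at s within {0..t})"
          by (auto intro!: derivative_eq_intros)
        have eq: "- (\<xi>0 i - ?c) * exp (- s) = (\<xi>0 i - ?c) * (exp (- s) * (- 1))" by (simp add: algebra_simps)
        show ?thesis unfolding eq has_real_derivative_iff_has_vector_derivative[symmetric] by (rule d)
      qed
    qed
    have ve: "(\<xi>0 i - ?c) * exp (- t) - (\<xi>0 i - ?c) * exp (- 0) = ?x t i - \<xi>0 i" by simp
    have fe: "(\<lambda>s. - ?x s i + (1 - 0) * mean N (?x s)) = (\<lambda>s. - (\<xi>0 i - ?c) * exp (- s))"
      unfolding mx by (simp add: fun_eq_iff algebra_simps)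
    show "((\<lambda>s. - ?x s i + (1 - 0) * mean N (?x s)) has_integral (?x t i - \<xi>0 i)) {0..t}"
      unfolding fe ve[symmetric] by (rule h)
  qed
qed

lemma bm_int:
  fixes f :: "real \<Rightarrow> real"
  assumes f: "f \<in> borel_measurable (lebesgue_on {a..b})" and B: "\<And>t. t \<in> {a..b} \<Longrightarrow> \<bar>f t\<bar> \<le> B"
  shows "f absolutely_integrable_on {a..b}" and "integrable (lebesgue_on {a..b}) f"
    and "f integrable_on {a..b}" and "integral\<^sup>L (lebesgue_on {a..b}) f = integral {a..b} f"
proof -
  show ai: "f absolutely_integrable_on {a..b}"
    by (rule measurable_bounded_by_integrable_imp_absolutely_integrable[OF f, where g = "\<lambda>_. B"]) (use B in auto)
  show il: "integrable (lebesgue_on {a..b}) f"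
    by (rule absolutely_integrable_imp_integrable[OF ai]) auto
  show "f integrable_on {a..b}" using ai set_lebesgue_integral_eq_integral(1) absolutely_integrable_on_def by blast
  show "integral\<^sup>L (lebesgue_on {a..b}) f = integral {a..b} f"
    by (rule lebesgue_integral_eq_integral[OF il]) auto
qed

definition uc :: "nat \<Rightarrow> (real \<Rightarrow> nat \<Rightarrow> real) \<times> (real \<Rightarrow> nat \<Rightarrow> real) \<Rightarrow> nat \<Rightarrow> real \<Rightarrow> real" where
  "uc N p i t = fst p t i * mean N (snd p t)"

definition Qf :: "nat \<Rightarrow> real \<Rightarrow> (real \<Rightarrow> nat \<Rightarrow> real) \<times> (real \<Rightarrow> nat \<Rightarrow> real) \<Rightarrow> real" where
  "Qf N T p = integral {0..T} (\<lambda>t. \<Sum>i<N. (uc N p i t)^2)"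

definition Dq :: "nat \<Rightarrow> real \<Rightarrow> (real \<Rightarrow> nat \<Rightarrow> real) \<times> (real \<Rightarrow> nat \<Rightarrow> real) \<Rightarrow> (real \<Rightarrow> nat \<Rightarrow> real) \<times> (real \<Rightarrow> nat \<Rightarrow> real) \<Rightarrow> real" where
  "Dq N T p q = integral {0..T} (\<lambda>t. \<Sum>i<N. (uc N p i t - uc N q i t)^2)"

definition feas :: "nat \<Rightarrow> real \<Rightarrow> (nat \<Rightarrow> real) \<Rightarrow> (real \<Rightarrow> nat \<Rightarrow> real) \<times> (real \<Rightarrow> nat \<Rightarrow> real) \<Rightarrow> bool" where
  "feas N T \<xi>0 p \<longleftrightarrow> admissible N T (fst p) \<and> is_traj N T \<xi>0 (fst p) (snd p)"

lemma uc_meas: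
  assumes "feas N T \<xi>0 p" "i < N"
  shows "uc N p i \<in> borel_measurable (lebesgue_on {0..T})"
proof -
  have [measurable]: "(\<lambda>t. fst p t i) \<in> borel_measurable (lebesgue_on {0..T})"
    using adm_meas assms unfolding feas_def by blast
  have [measurable]: "(\<lambda>t. mean N (snd p t)) \<in> borel_measurable (lebesgue_on {0..T})"
    using mean_meas assms unfolding feas_def by blast
  show ?thesis unfolding uc_def by measurable
qed

lemma uc_bounds:
  assumes N: "N \<ge> 1" and T: "T \<ge> 0" and m0: "mean N \<xi>0 > 0"
    and p: "feas N T \<xi>0 p" and t: "t \<in> {0..T}"
  shows "\<And>i. i < N \<Longrightarrow> 0 \<le> uc N p i t" "(\<Sum>i<N. uc N p i t) \<le> mean N (snd p t)"
    "\<And>i. i < N \<Longrightarrow> uc N p i t \<le> mean N \<xi>0"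
    "(\<Sum>i<N. (uc N p i t)^2) \<le> (mean N \<xi>0)^2"
proof -
  have a: "admissible N T (fst p)" and tr: "is_traj N T \<xi>0 (fst p) (snd p)" using p by (auto simp: feas_def)
  note mp = mean_props[OF tr a N T m0]
  show nn: "\<And>i. i < N \<Longrightarrow> 0 \<le> uc N p i t"
    unfolding uc_def using adm_bounds(1)[OF a t] mp(2)[OF t] by auto
  have "(\<Sum>i<N. uc N p i t) = (\<Sum>i<N. fst p t i) * mean N (snd p t)"
    by (simp add: uc_def sum_distrib_right)
  also have "\<dots> \<le> 1 * mean N (snd p t)"
    using adm_bounds(3)[OF a t] mp(2)[OF t] by (intro mult_right_mono) auto
  finally show sm: "(\<Sum>i<N. uc N p i t) \<le> mean N (snd p t)" by simp
  show le: "\<And>i. i < N \<Longrightarrow> uc N p i t \<le> mean N \<xi>0"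
  proof -
    fix i assume i: "i < N"
    have "uc N p i t \<le> (\<Sum>i<N. uc N p i t)"
      using i nn by (intro member_le_sum) auto
    then show "uc N p i t \<le> mean N \<xi>0" using sm mp(3)[OF t] by linarith
  qed
  have "(\<Sum>i<N. (uc N p i t)^2) \<le> (\<Sum>i<N. mean N \<xi>0 * uc N p i t)"
  proof (rule sum_mono)
    fix i assume "i \<in> {..<N}"
    then have i: "i < N" by simp
    have "uc N p i t * uc N p i t \<le> mean N \<xi>0 * uc N p i t"
      by (rule mult_right_mono[OF le[OF i] nn[OF i]])
    then show "(uc N p i t)^2 \<le> mean N \<xi>0 * uc N p i t" by (simp add: power2_eq_square)
  qed
  also have "\<dots> = mean N \<xi>0 * (\<Sum>i<N. uc N p i t)" by (simp add: sum_distrib_left)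
  also have "\<dots> \<le> mean N \<xi>0 * mean N \<xi>0"
    using sm mp(3)[OF t] m0 by (intro mult_left_mono) auto
  finally show "(\<Sum>i<N. (uc N p i t)^2) \<le> (mean N \<xi>0)^2" by (simp add: power2_eq_square)
qed




definition midP :: "nat \<Rightarrow> (real \<Rightarrow> nat \<Rightarrow> real) \<times> (real \<Rightarrow> nat \<Rightarrow> real) \<Rightarrow> (real \<Rightarrow> nat \<Rightarrow> real) \<times> (real \<Rightarrow> nat \<Rightarrow> real) \<Rightarrow> (real \<Rightarrow> nat \<Rightarrow> real) \<times> (real \<Rightarrow> nat \<Rightarrow> real)" where
  "midP N p q = (midA N (fst p) (snd p) (fst q) (snd q), midX (snd p) (snd q))"

lemma midP_feas:
  assumes N: "N \<ge> 1" and T: "T \<ge> 0" and m0: "mean N \<xi>0 > 0"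
    and p: "feas N T \<xi>0 p" and q: "feas N T \<xi>0 q"
  shows "feas N T \<xi>0 (midP N p q)"
  using mid_feas[OF N T m0, of "fst p" "snd p" "fst q" "snd q"] p q
  by (auto simp: feas_def midP_def)

lemma uc_mid:
  assumes N: "N \<ge> 1" and T: "T \<ge> 0" and m0: "mean N \<xi>0 > 0"
    and p: "feas N T \<xi>0 p" and q: "feas N T \<xi>0 q" and t: "t \<in> {0..T}"
  shows "uc N (midP N p q) i t = (uc N p i t + uc N q i t) / 2"
proof -
  have pp: "mean N (snd p t) > 0"
    using mean_props(2)[OF _ _ N T m0 t] p by (auto simp: feas_def)
  have qq: "mean N (snd q t) > 0"
    using mean_props(2)[OF _ _ N T m0 t] q by (auto simp: feas_def)
  show ?thesis
    unfolding uc_def midP_def fst_conv snd_conv mean_midX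
    unfolding midA_def using pp qq by (simp add: field_simps)
qed

lemma sq_bnd_meas:
  assumes N: "N \<ge> 1" and T: "T \<ge> 0" and m0: "mean N \<xi>0 > 0"
    and p: "feas N T \<xi>0 p" and q: "feas N T \<xi>0 q"
  shows "(\<lambda>t. \<Sum>i<N. (uc N p i t)^2) integrable_on {0..T}"
    and "(\<lambda>t. \<Sum>i<N. (uc N p i t - uc N q i t)^2) integrable_on {0..T}"
    and "(\<lambda>t. \<Sum>i<N. (uc N p i t - uc N q i t)^2) \<in> borel_measurable (lebesgue_on {0..T})"
proof -
  have [measurable]: "uc N p i \<in> borel_measurable (lebesgue_on {0..T})" if "i < N" for i
    using uc_meas[OF p that] .
  have [measurable]: "uc N q i \<in> borel_measurable (lebesgue_on {0..T})" if "i < N" for i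
    using uc_meas[OF q that] .
  have m1: "(\<lambda>t. \<Sum>i<N. (uc N p i t)^2) \<in> borel_measurable (lebesgue_on {0..T})"
    by (rule borel_measurable_sum) measurable
  show m2: "(\<lambda>t. \<Sum>i<N. (uc N p i t - uc N q i t)^2) \<in> borel_measurable (lebesgue_on {0..T})"
    by (rule borel_measurable_sum) measurable
  show "(\<lambda>t. \<Sum>i<N. (uc N p i t)^2) integrable_on {0..T}"
  proof (rule bm_int(3)[OF m1])
    fix t assume t: "t \<in> {0..T}"
    show "\<bar>\<Sum>i<N. (uc N p i t)^2\<bar> \<le> (mean N \<xi>0)^2"
      using uc_bounds(4)[OF N T m0 p t] by (simp add: sum_nonneg)
  qed
  show "(\<lambda>t. \<Sum>i<N. (uc N p i t - uc N q i t)^2) integrable_on {0..T}"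
  proof (rule bm_int(3)[OF m2])
    fix t assume t: "t \<in> {0..T}"
    have "(\<Sum>i<N. (uc N p i t - uc N q i t)^2) \<le> (\<Sum>i<N. (mean N \<xi>0)^2)"
    proof (rule sum_mono)
      fix i assume "i \<in> {..<N}"
      then have i: "i < N" by simp
      have a: "0 \<le> uc N p i t" "uc N p i t \<le> mean N \<xi>0" using uc_bounds(1,3)[OF N T m0 p t i] by auto
      have b: "0 \<le> uc N q i t" "uc N q i t \<le> mean N \<xi>0" using uc_bounds(1,3)[OF N T m0 q t i] by auto
      have "\<bar>uc N p i t - uc N q i t\<bar> \<le> mean N \<xi>0" using a b by linarith
      then show "(uc N p i t - uc N q i t)^2 \<le> (mean N \<xi>0)^2"
        by (metis abs_ge_zero power2_abs power_mono)
    qed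
    then show "\<bar>\<Sum>i<N. (uc N p i t - uc N q i t)^2\<bar> \<le> real N * (mean N \<xi>0)^2"
      by (simp add: sum_nonneg)
  qed
qed

lemma Q_mid:
  assumes N: "N \<ge> 1" and T: "T \<ge> 0" and m0: "mean N \<xi>0 > 0"
    and p: "feas N T \<xi>0 p" and q: "feas N T \<xi>0 q"
  shows "Qf N T (midP N p q) = (Qf N T p + Qf N T q) / 2 - Dq N T p q / 4"
proof -
  note ip = sq_bnd_meas(1)[OF N T m0 p q]
  note iq = sq_bnd_meas(1)[OF N T m0 q p]
  note id = sq_bnd_meas(2)[OF N T m0 p q]
  have pw: "(\<Sum>i<N. (uc N (midP N p q) i t)^2) =
      ((\<Sum>i<N. (uc N p i t)^2) + (\<Sum>i<N. (uc N q i t)^2)) / 2 - (\<Sum>i<N. (uc N p i t - uc N q i t)^2) / 4"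
    if t: "t \<in> {0..T}" for t
  proof -
    have "(\<Sum>i<N. (uc N (midP N p q) i t)^2) = (\<Sum>i<N. ((uc N p i t)^2 + (uc N q i t)^2) / 2 - (uc N p i t - uc N q i t)^2 / 4)"
      by (rule sum.cong) (auto simp: uc_mid[OF N T m0 p q t] power2_eq_square field_simps)
    also have "\<dots> = ((\<Sum>i<N. (uc N p i t)^2) + (\<Sum>i<N. (uc N q i t)^2)) / 2 - (\<Sum>i<N. (uc N p i t - uc N q i t)^2) / 4"
      by (simp add: sum_subtractf sum_divide_distrib[symmetric] sum.distrib)
    finally show ?thesis .
  qed
  have "Qf N T (midP N p q) = integral {0..T} (\<lambda>t. ((\<Sum>i<N. (uc N p i t)^2) + (\<Sum>i<N. (uc N q i t)^2)) / 2 - (\<Sum>i<N. (uc N p i t - uc N q i t)^2) / 4)"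
    unfolding Qf_def by (rule integral_cong) (use pw in auto)
  also have "\<dots> = integral {0..T} (\<lambda>t. ((\<Sum>i<N. (uc N p i t)^2) + (\<Sum>i<N. (uc N q i t)^2)) / 2) - integral {0..T} (\<lambda>t. (\<Sum>i<N. (uc N p i t - uc N q i t)^2) / 4)"
    by (rule integral_diff) (use ip iq id in \<open>auto intro: integrable_add integrable_on_divide\<close>)
  also have "integral {0..T} (\<lambda>t. ((\<Sum>i<N. (uc N p i t)^2) + (\<Sum>i<N. (uc N q i t)^2)) / 2) = (Qf N T p + Qf N T q) / 2"
    unfolding Qf_def using integral_add[OF ip iq] by simp
  also have "integral {0..T} (\<lambda>t. (\<Sum>i<N. (uc N p i t - uc N q i t)^2) / 4) = Dq N T p q / 4"
    unfolding Dq_def by simp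
  finally show ?thesis .
qed

lemma Q_bounds:
  assumes N: "N \<ge> 1" and T: "T \<ge> 0" and m0: "mean N \<xi>0 > 0" and p: "feas N T \<xi>0 p"
  shows "0 \<le> Qf N T p" "Qf N T p \<le> T * (mean N \<xi>0)^2"
proof -
  note ip = sq_bnd_meas(1)[OF N T m0 p p]
  show "0 \<le> Qf N T p" unfolding Qf_def
    by (rule integral_nonneg[OF ip]) (simp add: sum_nonneg)
  have "Qf N T p \<le> integral {0..T} (\<lambda>t. (mean N \<xi>0)^2)" unfolding Qf_def
    by (rule integral_le[OF ip]) (use uc_bounds(4)[OF N T m0 p] in auto)
  then show "Qf N T p \<le> T * (mean N \<xi>0)^2" using T by simp
qed

lemma Dq_nonneg:
  assumes N: "N \<ge> 1" and T: "T \<ge> 0" and m0: "mean N \<xi>0 > 0"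
    and p: "feas N T \<xi>0 p" and q: "feas N T \<xi>0 q"
  shows "0 \<le> Dq N T p q"
  unfolding Dq_def by (rule integral_nonneg[OF sq_bnd_meas(2)[OF N T m0 p q]]) (simp add: sum_nonneg)

lemma L1_from_Dq:
  assumes N: "N \<ge> 1" and T: "T \<ge> 0" and m0: "mean N \<xi>0 > 0"
    and p: "feas N T \<xi>0 p" and q: "feas N T \<xi>0 q" and i: "i < N" and d: "d > 0"
  shows "integral\<^sup>L (lebesgue_on {0..T}) (\<lambda>t. norm (uc N p i t - uc N q i t)) \<le> d * T + Dq N T p q / d"
proof -
  have [measurable]: "uc N p i \<in> borel_measurable (lebesgue_on {0..T})" using uc_meas[OF p i] .
  have [measurable]: "uc N q i \<in> borel_measurable (lebesgue_on {0..T})" using uc_meas[OF q i] .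
  have mf: "(\<lambda>t. norm (uc N p i t - uc N q i t)) \<in> borel_measurable (lebesgue_on {0..T})" by measurable
  have bd: "\<bar>norm (uc N p i t - uc N q i t)\<bar> \<le> 2 * mean N \<xi>0" if t: "t \<in> {0..T}" for t
    using uc_bounds(1,3)[OF N T m0 p t i] uc_bounds(1,3)[OF N T m0 q t i] by auto
  have e: "integral\<^sup>L (lebesgue_on {0..T}) (\<lambda>t. norm (uc N p i t - uc N q i t)) = integral {0..T} (\<lambda>t. norm (uc N p i t - uc N q i t))"
    by (rule bm_int(4)[OF mf bd])
  have ii: "(\<lambda>t. norm (uc N p i t - uc N q i t)) integrable_on {0..T}" by (rule bm_int(3)[OF mf bd])
  note id = sq_bnd_meas(2)[OF N T m0 p q]
  have "integral {0..T} (\<lambda>t. norm (uc N p i t - uc N q i t)) \<le> integral {0..T} (\<lambda>t. d + (\<Sum>j<N. (uc N p j t - uc N q j t)^2) / d)"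
  proof (rule integral_le[OF ii])
    show "(\<lambda>t. d + (\<Sum>j<N. (uc N p j t - uc N q j t)^2) / d) integrable_on {0..T}"
      using id by (intro integrable_add integrable_on_divide) auto
    fix t assume t: "t \<in> {0..T}"
    let ?x = "uc N p i t - uc N q i t"
    have "?x^2 \<le> (\<Sum>j<N. (uc N p j t - uc N q j t)^2)"
      using i by (intro member_le_sum[where f = "\<lambda>j. (uc N p j t - uc N q j t)^2"]) auto
    moreover have "\<bar>?x\<bar> \<le> d + ?x^2 / d"
    proof (cases "\<bar>?x\<bar> \<le> d")
      case True
      have "0 \<le> ?x^2 / d" using d by (intro divide_nonneg_pos) auto
      then show ?thesis using True by linarith
    next
      case False
      then have "\<bar>?x\<bar> * d \<le> \<bar>?x\<bar> * \<bar>?x\<bar>" using d by (intro mult_left_mono) auto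
      then have "\<bar>?x\<bar> \<le> ?x^2 / d" using d by (simp add: le_divide_eq power2_eq_square)
      then show ?thesis using d by linarith
    qed
    ultimately show "norm ?x \<le> d + (\<Sum>j<N. (uc N p j t - uc N q j t)^2) / d"
      using d by (simp add: divide_right_mono order_trans)
  qed
  also have "\<dots> = d * T + Dq N T p q / d"
    using T integral_add[OF integrable_const_ivl integrable_on_divide[OF id]] unfolding Dq_def by simp
  finally show ?thesis using e by simp
qed




definition usf :: "nat \<Rightarrow> (nat \<Rightarrow> (real \<Rightarrow> nat \<Rightarrow> real) \<times> (real \<Rightarrow> nat \<Rightarrow> real)) \<Rightarrow> nat \<Rightarrow> real \<Rightarrow> real" where
  "usf N Q i t = lim (\<lambda>n. uc N (Q n) i t)"

definition xsf :: "(nat \<Rightarrow> real \<Rightarrow> real) \<Rightarrow> real \<Rightarrow> nat \<Rightarrow> real" where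
  "xsf G = (\<lambda>t i. G i t)"

definition asf :: "nat \<Rightarrow> (nat \<Rightarrow> (real \<Rightarrow> nat \<Rightarrow> real) \<times> (real \<Rightarrow> nat \<Rightarrow> real)) \<Rightarrow> (nat \<Rightarrow> real \<Rightarrow> real) \<Rightarrow> real \<Rightarrow> nat \<Rightarrow> real" where
  "asf N Q G = (\<lambda>t i. max 0 (usf N Q i t) / max (mean N (xsf G t)) (\<Sum>k<N. max 0 (usf N Q k t)))"

locale exs =
  fixes N :: nat and T :: real and \<xi>0 :: "nat \<Rightarrow> real"
    and Q :: "nat \<Rightarrow> (real \<Rightarrow> nat \<Rightarrow> real) \<times> (real \<Rightarrow> nat \<Rightarrow> real)"
    and G :: "nat \<Rightarrow> real \<Rightarrow> real"
  assumes N: "N \<ge> 1" and Tp: "T > 0" and m0: "mean N \<xi>0 > 0"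
    and feasQ: "\<And>n. feas N T \<xi>0 (Q n)"
    and Gc: "\<And>i. i < N \<Longrightarrow> continuous_on {0..T} (G i)"
    and Gconv: "\<And>i x. i < N \<Longrightarrow> x \<in> {0..T} \<Longrightarrow> (\<lambda>n. snd (Q n) x i) \<longlonglongrightarrow> G i x"
    and AEc: "AE t in lebesgue_on {0..T}. \<forall>i\<in>{..<N}. Cauchy (\<lambda>n. uc N (Q n) i t)"
begin

lemma T: "T \<ge> 0" using Tp by simp

lemma admQ: "admissible N T (fst (Q n))" and trQ: "is_traj N T \<xi>0 (fst (Q n)) (snd (Q n))"
  using feasQ[of n] by (auto simp: feas_def)

lemma conv_mean: "t \<in> {0..T} \<Longrightarrow> (\<lambda>n. mean N (snd (Q n) t)) \<longlonglongrightarrow> mean N (xsf G t)"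
  unfolding mean_def xsf_def by (intro tendsto_intros) (use Gconv in auto)

lemma mean_xs_cont: "continuous_on {0..T} (\<lambda>t. mean N (xsf G t))"
  unfolding mean_def xsf_def by (intro continuous_intros) (use Gc in auto)

lemma mean_xs_nonneg: "t \<in> {0..T} \<Longrightarrow> 0 \<le> mean N (xsf G t)"
  by (rule LIMSEQ_le_const[OF conv_mean]) (use mean_props(2)[OF trQ admQ N T m0] in \<open>auto intro: less_imp_le\<close>)

lemma conv_u:
  assumes "Cauchy (\<lambda>n. uc N (Q n) i t)"
  shows "(\<lambda>n. uc N (Q n) i t) \<longlonglongrightarrow> usf N Q i t"
  using assms unfolding usf_def by (simp add: Cauchy_convergent_iff convergent_LIMSEQ_iff)

lemma good_props:
  assumes t: "t \<in> {0..T}" and c: "\<forall>i\<in>{..<N}. Cauchy (\<lambda>n. uc N (Q n) i t)"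
  shows "\<And>i. i < N \<Longrightarrow> 0 \<le> usf N Q i t" and "(\<Sum>i<N. usf N Q i t) \<le> mean N (xsf G t)"
proof -
  show "\<And>i. i < N \<Longrightarrow> 0 \<le> usf N Q i t"
    by (rule LIMSEQ_le_const[OF conv_u]) (use c uc_bounds(1)[OF N T m0 feasQ t] in auto)
  have "(\<lambda>n. \<Sum>i<N. uc N (Q n) i t) \<longlonglongrightarrow> (\<Sum>i<N. usf N Q i t)"
    by (intro tendsto_sum conv_u) (use c in auto)
  then show "(\<Sum>i<N. usf N Q i t) \<le> mean N (xsf G t)"
    by (rule LIMSEQ_le[OF _ conv_mean[OF t]]) (use uc_bounds(2)[OF N T m0 feasQ t] in auto)
qed

lemma good_integrand:
  assumes t: "t \<in> {0..T}" and c: "\<forall>i\<in>{..<N}. Cauchy (\<lambda>n. uc N (Q n) i t)" and i: "i < N"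
  shows "- xsf G t i + (1 - asf N Q G t i) * mean N (xsf G t) = - xsf G t i + mean N (xsf G t) - usf N Q i t"
proof -
  note gp = good_props[OF t c]
  have sm: "(\<Sum>k<N. max 0 (usf N Q k t)) = (\<Sum>k<N. usf N Q k t)"
    by (rule sum.cong) (use gp(1) in auto)
  show ?thesis
  proof (cases "mean N (xsf G t) > 0")
    case True
    have den: "max (mean N (xsf G t)) (\<Sum>k<N. max 0 (usf N Q k t)) = mean N (xsf G t)"
      using sm gp(2) by simp
    show ?thesis unfolding asf_def den using True gp(1)[OF i] by (simp add: field_simps)
  next
    case False
    then have z: "mean N (xsf G t) = 0" using mean_xs_nonneg[OF t] by simp
    have "(\<Sum>k<N. usf N Q k t) = 0" using gp z by (metis antisym sum_nonneg lessThan_iff)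
    then have "usf N Q i t = 0" using gp(1) i by (subst (asm) sum_nonneg_eq_0_iff) auto
    then show ?thesis using z by (simp add: asf_def)
  qed
qed

lemma us_meas: "i < N \<Longrightarrow> usf N Q i \<in> borel_measurable (lebesgue_on {0..T})"
  unfolding usf_def by (intro borel_measurable_lim_metric uc_meas[OF feasQ])

lemma adm_s: "admissible N T (asf N Q G)"
  unfolding admissible_def
proof (intro conjI)
  have [measurable]: "(\<lambda>t. mean N (xsf G t)) \<in> borel_measurable (lebesgue_on {0..T})"
    by (rule continuous_imp_measurable_on_sets_lebesgue[OF mean_xs_cont]) auto
  have [measurable]: "usf N Q k \<in> borel_measurable (lebesgue_on {0..T})" if "k < N" for k
    using us_meas[OF that] .
  have [measurable]: "(\<lambda>t. \<Sum>k<N. max 0 (usf N Q k t)) \<in> borel_measurable (lebesgue_on {0..T})"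
    by (rule borel_measurable_sum) measurable
  show "\<forall>i<N. (\<lambda>t. asf N Q G t i) \<in> borel_measurable (lebesgue_on {0..T})"
    unfolding asf_def by measurable
  show "\<forall>t\<in>{0..T}. (\<forall>i<N. 0 \<le> asf N Q G t i \<and> asf N Q G t i \<le> 1) \<and> (\<Sum>i<N. asf N Q G t i) \<le> 1"
  proof (intro ballI conjI allI impI)
    fix t assume t: "t \<in> {0..T}"
    let ?S = "\<Sum>k<N. max 0 (usf N Q k t)"
    let ?d = "max (mean N (xsf G t)) ?S"
    have S0: "0 \<le> ?S" by (simp add: sum_nonneg)
    have Sd: "?S \<le> ?d" by simp
    {
      fix i assume i: "i < N"
      show "0 \<le> asf N Q G t i" unfolding asf_def using S0 by (intro divide_nonneg_nonneg) auto
      have le: "max 0 (usf N Q i t) \<le> ?S" using i by (intro member_le_sum[where f = "\<lambda>k. max 0 (usf N Q k t)"]) auto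
      show "asf N Q G t i \<le> 1"
      proof (cases "?d = 0")
        case True then show ?thesis by (simp add: asf_def)
      next
        case False
        then have dp: "?d > 0" using S0 Sd by linarith
        have le2: "max 0 (usf N Q i t) \<le> ?d" using le Sd by linarith
        show ?thesis unfolding asf_def using divide_le_eq_1_pos[OF dp] le2 by simp
      qed
    }
    have "(\<Sum>i<N. asf N Q G t i) = ?S / ?d" unfolding asf_def by (simp add: sum_divide_distrib)
    also have "\<dots> \<le> 1"
    proof (cases "?d = 0")
      case True then show ?thesis by simp
    next
      case False
      then have "?d > 0" using S0 Sd by linarith
      then show ?thesis using Sd by (simp add: divide_le_eq)
    qed
    finally show "(\<Sum>i<N. asf N Q G t i) \<le> 1" .
  qed
qed

lemma Bnd_nonneg: "0 \<le> Bnd N \<xi>0" using Bnd_ge[of N \<xi>0] m0 by linarith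

lemma fintQ_eq: "fint N (fst (Q n)) (snd (Q n)) i s = - snd (Q n) s i + mean N (snd (Q n) s) - uc N (Q n) i s"
  by (simp add: fint_def uc_def algebra_simps)

lemma traj_eq:
  assumes i: "i < N" and t: "t \<in> {0..T}"
  shows "((\<lambda>s. - xsf G s i + (1 - asf N Q G s i) * mean N (xsf G s)) has_integral (xsf G t i - \<xi>0 i)) {0..t}"
proof -
  let ?M = "lebesgue_on {0..t}"
  let ?f = "\<lambda>s. - xsf G s i + (1 - asf N Q G s i) * mean N (xsf G s)"
  let ?s = "\<lambda>n. fint N (fst (Q n)) (snd (Q n)) i"
  have sub: "{0..t} \<subseteq> {0..T}" using t by auto
  have [measurable]: "(\<lambda>s. mean N (xsf G s)) \<in> borel_measurable (lebesgue_on {0..T})"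
    by (rule continuous_imp_measurable_on_sets_lebesgue[OF mean_xs_cont]) auto
  have [measurable]: "(\<lambda>s. xsf G s i) \<in> borel_measurable (lebesgue_on {0..T})"
    unfolding xsf_def by (rule continuous_imp_measurable_on_sets_lebesgue[OF Gc[OF i]]) auto
  have [measurable]: "(\<lambda>s. asf N Q G s i) \<in> borel_measurable (lebesgue_on {0..T})"
    using adm_s i unfolding admissible_def by blast
  have fm: "?f \<in> borel_measurable ?M"
    by (rule measurable_restrict_mono[OF _ sub]) measurable
  have sm: "?s n \<in> borel_measurable ?M" for n
  proof -
    have [measurable]: "(\<lambda>s. snd (Q n) s i) \<in> borel_measurable (lebesgue_on {0..T})"
      by (rule continuous_imp_measurable_on_sets_lebesgue[OF traj_cont[OF trQ i]]) auto
    have [measurable]: "(\<lambda>s. mean N (snd (Q n) s)) \<in> borel_measurable (lebesgue_on {0..T})"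
      by (rule mean_meas[OF trQ])
    have [measurable]: "(\<lambda>s. fst (Q n) s i) \<in> borel_measurable (lebesgue_on {0..T})"
      by (rule adm_meas[OF admQ i])
    show ?thesis unfolding fint_def by (rule measurable_restrict_mono[OF _ sub]) measurable
  qed
  have wi: "integrable ?M (\<lambda>_. 2 * Bnd N \<xi>0)" by simp
  have ae: "AE s in ?M. (\<lambda>n. ?s n s) \<longlonglongrightarrow> ?f s"
  proof -
    have "AE s in lebesgue. s \<in> {0..T} \<longrightarrow> (\<forall>i\<in>{..<N}. Cauchy (\<lambda>n. uc N (Q n) i s))"
      using AEc by (subst (asm) AE_restrict_space_iff) auto
    then have "AE s in lebesgue. s \<in> {0..t} \<longrightarrow> (\<lambda>n. ?s n s) \<longlonglongrightarrow> ?f s"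
    proof (rule AE_mp, intro AE_I2 impI)
      fix s assume h: "s \<in> {0..T} \<longrightarrow> (\<forall>i\<in>{..<N}. Cauchy (\<lambda>n. uc N (Q n) i s))" and s: "s \<in> {0..t}"
      have sT: "s \<in> {0..T}" using s sub by auto
      have c: "\<forall>i\<in>{..<N}. Cauchy (\<lambda>n. uc N (Q n) i s)" using h sT by blast
      have "(\<lambda>n. - snd (Q n) s i + mean N (snd (Q n) s) - uc N (Q n) i s) \<longlonglongrightarrow> - xsf G s i + mean N (xsf G s) - usf N Q i s"
        using Gconv[OF i sT] conv_mean[OF sT] conv_u c i unfolding xsf_def by (intro tendsto_intros) auto
      then show "(\<lambda>n. ?s n s) \<longlonglongrightarrow> ?f s"
        unfolding fintQ_eq good_integrand[OF sT c i] .
    qed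
    then show ?thesis by (subst AE_restrict_space_iff) auto
  qed
  have bd: "AE s in ?M. norm (?s n s) \<le> 2 * Bnd N \<xi>0" for n
  proof (rule AE_I2)
    fix s assume "s \<in> space ?M"
    then have "s \<in> {0..T}" using sub by auto
    then show "norm (?s n s) \<le> 2 * Bnd N \<xi>0" using fint_bound[OF trQ admQ N T m0 i] by simp
  qed
  have fi: "integrable ?M ?f" by (rule integrable_dominated_convergence[OF fm sm wi ae bd])
  have si: "integrable ?M (?s n)" for n by (rule integrable_dominated_convergence2[OF fm sm wi ae bd])
  have lim: "(\<lambda>n. integral\<^sup>L ?M (?s n)) \<longlonglongrightarrow> integral\<^sup>L ?M ?f"
    by (rule integral_dominated_convergence[OF fm sm wi ae bd])
  have "integral\<^sup>L ?M (?s n) = snd (Q n) t i - \<xi>0 i" for n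
  proof -
    have "integral\<^sup>L ?M (?s n) = integral {0..t} (?s n)"
      by (rule lebesgue_integral_eq_integral[OF si]) auto
    also have "\<dots> = snd (Q n) t i - \<xi>0 i"
      by (rule integral_unique[OF traj_has_int[OF trQ i t]])
    finally show ?thesis .
  qed
  then have "(\<lambda>n. integral\<^sup>L ?M (?s n)) \<longlonglongrightarrow> xsf G t i - \<xi>0 i"
    unfolding xsf_def using Gconv[OF i t] by (simp add: tendsto_diff)
  then have "integral\<^sup>L ?M ?f = xsf G t i - \<xi>0 i" using lim LIMSEQ_unique by blast
  then show ?thesis using has_integral_integral_lebesgue_on[OF fi] by auto
qed

lemma traj_s: "is_traj N T \<xi>0 (asf N Q G) (xsf G)"
  unfolding is_traj_def
proof (intro conjI allI impI ballI)
  fix i assume i: "i < N"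
  show "continuous_on {0..T} (\<lambda>t. xsf G t i)" unfolding xsf_def using Gc[OF i] by simp
  fix t assume "t \<in> {0..T}"
  then show "((\<lambda>s. - xsf G s i + (1 - asf N Q G s i) * mean N (xsf G s)) has_integral (xsf G t i - \<xi>0 i)) {0..t}"
    by (rule traj_eq[OF i])
qed

lemma cost_conv: "(\<lambda>n. cost N T (snd (Q n))) \<longlonglongrightarrow> cost N T (xsf G)"
proof -
  have dc: "(\<lambda>k. integral {0..T} (\<lambda>t. Vfun N (snd (Q k) t))) \<longlonglongrightarrow> integral {0..T} (\<lambda>t. Vfun N (xsf G t))"
  proof (rule dominated_convergence(2))
    show "(\<lambda>t. Vfun N (snd (Q k) t)) integrable_on {0..T}" for k
      by (rule integrable_continuous_interval[OF Vfun_cont[OF trQ]])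
    show "(\<lambda>t. (Bnd N \<xi>0)^2) integrable_on {0..T}" by (rule integrable_const_ivl)
    fix k t assume t: "t \<in> {0..T}"
    have "Vfun N (snd (Q k) t) \<le> (1 / real N) * (\<Sum>i<N. (Bnd N \<xi>0)^2)"
      unfolding Vfun_def
    proof (intro mult_left_mono sum_mono)
      fix i assume "i \<in> {..<N}"
      then have "\<bar>snd (Q k) t i\<bar> \<le> Bnd N \<xi>0" using traj_bound2[OF trQ admQ N T m0 _ t] by auto
      then show "(snd (Q k) t i)^2 \<le> (Bnd N \<xi>0)^2" by (metis abs_ge_zero power2_abs power_mono)
    qed auto
    then show "norm (Vfun N (snd (Q k) t)) \<le> (Bnd N \<xi>0)^2" using N Vfun_nonneg[of N "snd (Q k) t"] by simp
  next
    fix t assume t: "t \<in> {0..T}"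
    show "(\<lambda>k. Vfun N (snd (Q k) t)) \<longlonglongrightarrow> Vfun N (xsf G t)"
      unfolding Vfun_def xsf_def by (intro tendsto_intros) (use Gconv t in auto)
  qed
  then show ?thesis unfolding cost_def .
qed

end




lemma nested_subseq:
  fixes Pr :: "nat \<Rightarrow> (nat \<Rightarrow> nat) \<Rightarrow> bool"
  assumes step: "\<And>i (r::nat\<Rightarrow>nat). i < K \<Longrightarrow> strict_mono r \<Longrightarrow> \<exists>r'::nat\<Rightarrow>nat. strict_mono r' \<and> Pr i (r \<circ> r')"
    and mono: "\<And>i (r::nat\<Rightarrow>nat) (r'::nat\<Rightarrow>nat). i < K \<Longrightarrow> Pr i r \<Longrightarrow> strict_mono r' \<Longrightarrow> Pr i (r \<circ> r')"
  shows "\<exists>r. strict_mono r \<and> (\<forall>i<K. Pr i r)"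
proof -
  have "k \<le> K \<Longrightarrow> \<exists>r. strict_mono r \<and> (\<forall>i<k. Pr i r)" for k
  proof (induction k)
    case 0
    have "strict_mono (id :: nat \<Rightarrow> nat)" by (simp add: strict_mono_def)
    then show ?case by blast
  next
    case (Suc k)
    then obtain r where r: "strict_mono r" "\<forall>i<k. Pr i r" by auto
    obtain r' where r': "strict_mono r'" "Pr k (r \<circ> r')" using step[of k r] Suc.prems r(1) by auto
    have "strict_mono (r \<circ> r')" using r(1) r'(1) by (rule strict_mono_o)
    moreover have "\<forall>i<Suc k. Pr i (r \<circ> r')"
    proof (intro allI impI)
      fix i assume "i < Suc k"
      then show "Pr i (r \<circ> r')"
        using mono[of i r r'] r r' Suc.prems by (cases "i = k") auto
    qed
    ultimately show ?case by blast
  qed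
  then show ?thesis by blast
qed

lemma exists_opt:
  assumes N: "N \<ge> 1" and Tp: "T > 0" and m0: "mean N \<xi>0 > 0"
  shows "\<exists>\<alpha> \<xi>. admissible N T \<alpha> \<and> is_traj N T \<xi>0 \<alpha> \<xi> \<and>
           (\<forall>\<beta> \<eta>. admissible N T \<beta> \<and> is_traj N T \<xi>0 \<beta> \<eta> \<longrightarrow> cost N T \<xi> \<le> cost N T \<eta>)"
proof -
  have T: "T \<ge> 0" using Tp by simp
  define Fs where "Fs = {p. feas N T \<xi>0 p}"
  define C where "C = (\<lambda>p::(real \<Rightarrow> nat \<Rightarrow> real) \<times> (real \<Rightarrow> nat \<Rightarrow> real). cost N T (snd p))"
  define m where "m = Inf (C ` Fs)"
  have ne: "Fs \<noteq> {}"
  proof -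
    have "feas N T \<xi>0 (\<lambda>t i. 0, \<lambda>t i. mean N \<xi>0 + (\<xi>0 i - mean N \<xi>0) * exp (- t))"
      using feas_nonempty(1)[OF N T] feas_nonempty(2)[OF N T, of \<xi>0] unfolding feas_def by simp
    then show ?thesis unfolding Fs_def by blast
  qed
  have bdd: "bdd_below (C ` Fs)"
    unfolding bdd_below_def Fs_def C_def feas_def using cost_nonneg by blast
  have mle: "m \<le> C p" if "p \<in> Fs" for p
    unfolding m_def by (rule cInf_lower) (use bdd that in auto)
  define Fn where "Fn n = {p \<in> Fs. C p \<le> m + 1 / real (Suc n)}" for n
  have Fn_ne: "Fn n \<noteq> {}" for n
  proof -
    have "Inf (C ` Fs) < m + 1 / real (Suc n)" unfolding m_def by simp
    then obtain x where "x \<in> C ` Fs" "x < m + 1 / real (Suc n)" using cInf_less_iff[OF _ bdd] ne by auto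
    then show ?thesis unfolding Fn_def by force
  qed
  have Fn_feas: "feas N T \<xi>0 p" if "p \<in> Fn n" for p n using that by (auto simp: Fn_def Fs_def)
  have Qbdd: "bdd_below (Qf N T ` Fn n)" for n
    unfolding bdd_below_def using Q_bounds(1)[OF N T m0 Fn_feas] by blast
  define q where "q n = Inf (Qf N T ` Fn n)" for n
  have qle: "q n \<le> Qf N T p" if "p \<in> Fn n" for p n
    unfolding q_def by (rule cInf_lower) (use Qbdd that in auto)
  have "\<exists>p. p \<in> Fn n \<and> Qf N T p < q n + 1 / real (Suc n)" for n
  proof -
    have "Inf (Qf N T ` Fn n) < q n + 1 / real (Suc n)" unfolding q_def by simp
    then show ?thesis using cInf_less_iff[OF _ Qbdd] Fn_ne by auto
  qed
  then obtain P where P: "\<And>n. P n \<in> Fn n" "\<And>n. Qf N T (P n) < q n + 1 / real (Suc n)" by metis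
  have feasP: "feas N T \<xi>0 (P n)" for n using Fn_feas[OF P(1)] .
  have CP: "C (P n) \<le> m + 1 / real (Suc n)" "m \<le> C (P n)" for n
    using P(1)[of n] mle by (auto simp: Fn_def)
  have qmono: "q n \<le> q k" if "n \<le> k" for n k
  proof -
    have "1 / real (Suc k) \<le> 1 / real (Suc n)" using that by (simp add: frac_le)
    then have "Fn k \<subseteq> Fn n" unfolding Fn_def by auto
    then show ?thesis unfolding q_def by (intro cInf_superset_mono) (use Fn_ne Qbdd in auto)
  qed
  have qub: "q n \<le> T * (mean N \<xi>0)^2" for n
    using qle[OF P(1)] Q_bounds(2)[OF N T m0 feasP] order_trans by blast
  have "q \<longlonglongrightarrow> (SUP i. q i)"
    by (rule LIMSEQ_incseq_SUP) (use qub qmono in \<open>auto simp: incseq_def bdd_above_def\<close>)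
  then have qC: "Cauchy q" using LIMSEQ_imp_Cauchy by blast
  have Dsym: "Dq N T p p' = Dq N T p' p" for p p'
    unfolding Dq_def by (simp add: power2_commute)
  have Dest: "Dq N T (P n) (P k) \<le> 2 * q k - 2 * q n + 4 * (1 / real (Suc n))" if nk: "n \<le> k" for n k
  proof -
    let ?mid = "midP N (P n) (P k)"
    have fm: "feas N T \<xi>0 ?mid" by (rule midP_feas[OF N T m0 feasP feasP])
    have tn: "is_traj N T \<xi>0 (fst (P n)) (snd (P n))" and tk: "is_traj N T \<xi>0 (fst (P k)) (snd (P k))"
      using feasP by (auto simp: feas_def)
    have c3: "continuous_on {0..T} (\<lambda>t. Vfun N (\<lambda>i. snd (P n) t i - snd (P k) t i))"
      unfolding Vfun_def by (intro continuous_intros) (use traj_cont[OF tn] traj_cont[OF tk] in auto)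
    have I0: "0 \<le> integral {0..T} (\<lambda>t. Vfun N (\<lambda>i. snd (P n) t i - snd (P k) t i))"
      by (rule integral_nonneg[OF integrable_continuous_interval[OF c3]]) (simp add: Vfun_nonneg)
    have Cm: "C ?mid = (C (P n) + C (P k)) / 2 - integral {0..T} (\<lambda>t. Vfun N (\<lambda>i. snd (P n) t i - snd (P k) t i)) / 4"
      unfolding C_def midP_def snd_conv by (rule cost_mid[OF tn tk])
    have "1 / real (Suc k) \<le> 1 / real (Suc n)" using nk by (simp add: frac_le)
    then have h1: "C (P k) \<le> m + 1 / real (Suc n)" using CP[of k] by linarith
    have key: "\<And>x1 x2 x3 x4 x5. x3 = (x1 + x2) / 2 - x4 / 4 \<Longrightarrow> 0 \<le> x4 \<Longrightarrow> x1 \<le> x5 \<Longrightarrow> x2 \<le> x5 \<Longrightarrow> x3 \<le> (x5::real)"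
      by (simp add: field_simps)
    have "C ?mid \<le> m + 1 / real (Suc n)" by (rule key[OF Cm I0 CP(1)[of n] h1])
    then have "?mid \<in> Fn n" using fm by (auto simp: Fn_def Fs_def)
    then have "q n \<le> Qf N T ?mid" by (rule qle)
    also have "\<dots> = (Qf N T (P n) + Qf N T (P k)) / 2 - Dq N T (P n) (P k) / 4"
      by (rule Q_mid[OF N T m0 feasP feasP])
    finally have hq: "q n \<le> (Qf N T (P n) + Qf N T (P k)) / 2 - Dq N T (P n) (P k) / 4" .
    have "Dq N T (P n) (P k) \<le> 2 * Qf N T (P n) + 2 * Qf N T (P k) - 4 * q n"
      using mult_left_mono[OF hq, of 4] by (simp add: algebra_simps)
    moreover have "Qf N T (P k) < q k + 1 / real (Suc n)"
      using P(2)[of k] \<open>1 / real (Suc k) \<le> 1 / real (Suc n)\<close> by linarith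
    ultimately show ?thesis using P(2)[of n] by linarith
  qed
  have DqC: "\<exists>M. \<forall>n\<ge>M. \<forall>k\<ge>M. Dq N T (P n) (P k) < e" if e: "e > 0" for e
  proof -
    obtain M1 where M1: "\<forall>n\<ge>M1. \<forall>k\<ge>M1. dist (q n) (q k) < e / 4"
      using qC e unfolding Cauchy_def by (meson zero_less_divide_iff zero_less_numeral)
    obtain M2 where M2: "8 / e < real M2" using reals_Archimedean2 by blast
    have M2': "4 * (1 / real (Suc M2)) < e / 2"
    proof -
      have "8 < e * real M2" using M2 e by (simp add: divide_less_eq mult.commute)
      then have "8 < e * real (Suc M2)" using e by (smt (verit) of_nat_Suc distrib_left mult_cancel_left1)
      then show ?thesis using e by (simp add: divide_less_eq field_simps)
    qed
    show ?thesis
    proof (intro exI[of _ "max M1 M2"] allI impI)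
      fix n k assume n: "max M1 M2 \<le> n" and k: "max M1 M2 \<le> k"
      have a: "\<bar>q n - q k\<bar> < e / 4" using M1 n k by (simp add: dist_real_def)
      have b: "4 * (1 / real (Suc n)) \<le> 4 * (1 / real (Suc M2))" "4 * (1 / real (Suc k)) \<le> 4 * (1 / real (Suc M2))"
        using n k by (auto simp: frac_le)
      show "Dq N T (P n) (P k) < e"
      proof (cases "n \<le> k")
        case True then show ?thesis using Dest[OF True] a b M2' by linarith
      next
        case False then have "k \<le> n" by simp
        then show ?thesis using Dest[of k n] Dsym[of "P n" "P k"] a b M2' by linarith
      qed
    qed
  qed
  have L1C: "\<exists>M. \<forall>n\<ge>M. \<forall>k\<ge>M. integral\<^sup>L (lebesgue_on {0..T}) (\<lambda>t. norm (uc N (P n) i t - uc N (P k) i t)) < e"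
    if i: "i < N" and e: "e > 0" for i e
  proof -
    define d where "d = e / (2 * (T + 1))"
    have d: "d > 0" using e T by (simp add: d_def)
    have dT: "d * T < e / 2" using e T by (simp add: d_def field_simps)
    obtain M where M: "\<forall>n\<ge>M. \<forall>k\<ge>M. Dq N T (P n) (P k) < d * (e / 2)"
      using DqC[of "d * (e / 2)"] d e by auto
    show ?thesis
    proof (intro exI[of _ M] allI impI)
      fix n k assume "M \<le> n" "M \<le> k"
      then have "Dq N T (P n) (P k) < d * (e / 2)" using M by blast
      then have "Dq N T (P n) (P k) / d < e / 2" using d by (simp add: divide_less_eq mult.commute)
      then show "integral\<^sup>L (lebesgue_on {0..T}) (\<lambda>t. norm (uc N (P n) i t - uc N (P k) i t)) < e"
        using L1_from_Dq[OF N T m0 feasP feasP i d, of n k] dT by linarith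
    qed
  qed
  define B where "B = Bnd N \<xi>0"
  have B0: "0 \<le> B" using Bnd_ge[of N \<xi>0] m0 by (simp add: B_def)
  have trP: "is_traj N T \<xi>0 (fst (P n)) (snd (P n))" and admP: "admissible N T (fst (P n))" for n
    using feasP by (auto simp: feas_def)
  have lip: "\<bar>snd (P n) x i - snd (P n) y i\<bar> \<le> 2 * B * \<bar>x - y\<bar>" if "i < N" "x \<in> {0..T}" "y \<in> {0..T}" for n i x y
  proof (cases "x \<le> y")
    case True then show ?thesis
      using traj_lip[OF trP admP N T m0 that(1), of x y] that by (auto simp: B_def abs_minus_commute)
  next
    case False then show ?thesis
      using traj_lip[OF trP admP N T m0 that(1), of y x] that by (auto simp: B_def)
  qed
  define Pr where "Pr i r \<longleftrightarrow> (\<exists>g. continuous_on {0..T} g \<and> (\<forall>e>0. \<exists>M. \<forall>n\<ge>M. \<forall>x\<in>{0..T}. \<bar>snd (P (r n)) x i - g x\<bar> < e))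
      \<and> (AE t in lebesgue_on {0..T}. Cauchy (\<lambda>n. uc N (P (r n)) i t))" for i r
  have "\<exists>R. strict_mono R \<and> (\<forall>i<N. Pr i R)"
  proof (rule nested_subseq)
    fix i r assume i: "i < N" and r: "strict_mono (r :: nat \<Rightarrow> nat)"
    obtain g and k1 :: "nat \<Rightarrow> nat" where g: "continuous_on {0..T} g" and k1: "strict_mono k1"
      and unif: "\<And>e. 0 < e \<Longrightarrow> \<exists>M. \<forall>n x. n \<ge> M \<and> x \<in> {0..T} \<longrightarrow> norm (snd (P (r (k1 n))) x i - g x) < e"
    proof (rule Arzela_Ascoli[of "{0..T}" "\<lambda>n x. snd (P (r n)) x i" B])
      show "compact {0..T::real}" by simp
      fix n x assume "x \<in> {0..T::real}"
      then show "norm (snd (P (r n)) x i) \<le> B" using traj_bound2[OF trP admP N T m0 i] by (simp add: B_def)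
    next
      fix x e assume x: "x \<in> {0..T::real}" and e: "0 < (e::real)"
      show "\<exists>d>0. \<forall>n y. y \<in> {0..T} \<and> norm (x - y) < d \<longrightarrow> norm (snd (P (r n)) x i - snd (P (r n)) y i) < e"
      proof (intro exI[of _ "e / (2 * B + 1)"] conjI allI impI)
        show "0 < e / (2 * B + 1)" using e B0 by simp
        fix n y assume y: "y \<in> {0..T} \<and> norm (x - y) < e / (2 * B + 1)"
        have "\<bar>snd (P (r n)) x i - snd (P (r n)) y i\<bar> \<le> 2 * B * \<bar>x - y\<bar>" using lip i x y by blast
        also have "\<dots> \<le> 2 * B * (e / (2 * B + 1))" using y B0 by (intro mult_left_mono) auto
        also have "\<dots> < e" using e B0 by (simp add: field_simps)
        finally show "norm (snd (P (r n)) x i - snd (P (r n)) y i) < e" by simp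
      qed
    qed (rule that, assumption+)
    define s where "s n = uc N (P (r (k1 n))) i" for n :: nat
    obtain k2 :: "nat \<Rightarrow> nat" where k2: "strict_mono k2" and ae: "AE t in lebesgue_on {0..T}. Cauchy (\<lambda>j. s (k2 j) t)"
    proof (rule cauchy_L1_AE_cauchy_subseq[of "lebesgue_on {0..T}" s])
      fix n
      show "integrable (lebesgue_on {0..T}) (s n)" unfolding s_def
        by (rule bm_int(2)[OF uc_meas[OF feasP i], where B = "mean N \<xi>0"])
           (use uc_bounds(1,3)[OF N T m0 feasP _ i] in fastforce)
    next
      fix e :: real assume e: "e > 0"
      obtain M where M: "\<forall>n\<ge>M. \<forall>k\<ge>M. integral\<^sup>L (lebesgue_on {0..T}) (\<lambda>t. norm (uc N (P n) i t - uc N (P k) i t)) < e"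
        using L1C[OF i e] by blast
      show "\<exists>M. \<forall>a\<ge>M. \<forall>b\<ge>M. integral\<^sup>L (lebesgue_on {0..T}) (\<lambda>x. norm (s a x - s b x)) < e"
      proof (intro exI[of _ M] allI impI)
        fix a b assume "M \<le> a" "M \<le> b"
        moreover have "a \<le> r (k1 a)" "b \<le> r (k1 b)"
          using seq_suble[OF r] seq_suble[OF k1] order_trans by blast+
        ultimately show "integral\<^sup>L (lebesgue_on {0..T}) (\<lambda>x. norm (s a x - s b x)) < e"
          using M unfolding s_def by auto
      qed
    qed
    show "\<exists>r'. strict_mono r' \<and> Pr i (r \<circ> r')"
    proof (intro exI[of _ "k1 \<circ> k2"] conjI)
      show "strict_mono (k1 \<circ> k2)" using k1 k2 by (rule strict_mono_o)
      show "Pr i (r \<circ> (k1 \<circ> k2))"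
        unfolding Pr_def
      proof (intro conjI exI[of _ g])
        show "continuous_on {0..T} g" by (rule g)
        show "\<forall>e>0. \<exists>M. \<forall>n\<ge>M. \<forall>x\<in>{0..T}. \<bar>snd (P ((r \<circ> (k1 \<circ> k2)) n)) x i - g x\<bar> < e"
        proof (intro allI impI)
          fix e :: real assume "e > 0"
          then obtain M where M: "\<forall>n x. n \<ge> M \<and> x \<in> {0..T} \<longrightarrow> norm (snd (P (r (k1 n))) x i - g x) < e"
            using unif by blast
          show "\<exists>M. \<forall>n\<ge>M. \<forall>x\<in>{0..T}. \<bar>snd (P ((r \<circ> (k1 \<circ> k2)) n)) x i - g x\<bar> < e"
          proof (intro exI[of _ M] allI impI ballI)
            fix n x assume "M \<le> n" "x \<in> {0..T}"
            moreover have "n \<le> k2 n" using seq_suble[OF k2] .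
            ultimately show "\<bar>snd (P ((r \<circ> (k1 \<circ> k2)) n)) x i - g x\<bar> < e" using M by fastforce
          qed
        qed
        show "AE t in lebesgue_on {0..T}. Cauchy (\<lambda>n. uc N (P ((r \<circ> (k1 \<circ> k2)) n)) i t)"
          using ae by (simp add: s_def o_def)
      qed
    qed
  next
    fix i r r' assume i: "i < N" and pr: "Pr i r" and r': "strict_mono (r' :: nat \<Rightarrow> nat)"
    obtain g where g: "continuous_on {0..T} g" and u: "\<forall>e>0. \<exists>M. \<forall>n\<ge>M. \<forall>x\<in>{0..T}. \<bar>snd (P (r n)) x i - g x\<bar> < e"
      and ae: "AE t in lebesgue_on {0..T}. Cauchy (\<lambda>n. uc N (P (r n)) i t)"
      using pr unfolding Pr_def by blast
    show "Pr i (r \<circ> r')" unfolding Pr_def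
    proof (intro conjI exI[of _ g])
      show "continuous_on {0..T} g" by (rule g)
      show "\<forall>e>0. \<exists>M. \<forall>n\<ge>M. \<forall>x\<in>{0..T}. \<bar>snd (P ((r \<circ> r') n)) x i - g x\<bar> < e"
      proof (intro allI impI)
        fix e :: real assume "e > 0"
        then obtain M where M: "\<forall>n\<ge>M. \<forall>x\<in>{0..T}. \<bar>snd (P (r n)) x i - g x\<bar> < e" using u by blast
        show "\<exists>M. \<forall>n\<ge>M. \<forall>x\<in>{0..T}. \<bar>snd (P ((r \<circ> r') n)) x i - g x\<bar> < e"
        proof (intro exI[of _ M] allI impI ballI)
          fix n x assume "M \<le> n" "x \<in> {0..T}"
          moreover have "n \<le> r' n" using seq_suble[OF r'] .
          ultimately show "\<bar>snd (P ((r \<circ> r') n)) x i - g x\<bar> < e" using M by fastforce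
        qed
      qed
      show "AE t in lebesgue_on {0..T}. Cauchy (\<lambda>n. uc N (P ((r \<circ> r') n)) i t)"
        using ae by eventually_elim (drule Cauchy_subseq_Cauchy[OF _ r'], simp add: o_def)
    qed
  qed
  then obtain R where R: "strict_mono R" and PrR: "\<And>i. i < N \<Longrightarrow> Pr i R" by blast
  have "\<forall>i\<in>{..<N}. \<exists>g. continuous_on {0..T} g \<and> (\<forall>e>0. \<exists>M. \<forall>n\<ge>M. \<forall>x\<in>{0..T}. \<bar>snd (P (R n)) x i - g x\<bar> < e)"
    using PrR unfolding Pr_def by blast
  then obtain G where G: "\<And>i. i \<in> {..<N} \<Longrightarrow> continuous_on {0..T} (G i) \<and> (\<forall>e>0. \<exists>M. \<forall>n\<ge>M. \<forall>x\<in>{0..T}. \<bar>snd (P (R n)) x i - G i x\<bar> < e)"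
    by metis
  interpret E: exs N T \<xi>0 "\<lambda>n. P (R n)" G
  proof
    show "N \<ge> 1" "T > 0" "mean N \<xi>0 > 0" by (fact N Tp m0)+
    show "\<And>n. feas N T \<xi>0 (P (R n))" by (rule feasP)
    show "\<And>i. i < N \<Longrightarrow> continuous_on {0..T} (G i)" using G by blast
    show "\<And>i x. i < N \<Longrightarrow> x \<in> {0..T} \<Longrightarrow> (\<lambda>n. snd (P (R n)) x i) \<longlonglongrightarrow> G i x"
    proof -
      fix i x assume i: "i < N" and x: "x \<in> {0..T}"
      show "(\<lambda>n. snd (P (R n)) x i) \<longlonglongrightarrow> G i x"
        unfolding lim_sequentially dist_real_def using G[of i] i x by fastforce
    qed
    show "AE t in lebesgue_on {0..T}. \<forall>i\<in>{..<N}. Cauchy (\<lambda>n. uc N (P (R n)) i t)"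
      by (rule AE_finite_allI) (use PrR in \<open>auto simp: Pr_def\<close>)
  qed
  have cm: "cost N T (xsf G) = m"
  proof -
    have "(\<lambda>n. C (P (R n))) \<longlonglongrightarrow> m"
    proof (rule tendsto_sandwich[where f = "\<lambda>n. m" and h = "\<lambda>n. m + inverse (real (Suc n))"])
      show "\<forall>\<^sub>F n in sequentially. m \<le> C (P (R n))" using CP by auto
      show "\<forall>\<^sub>F n in sequentially. C (P (R n)) \<le> m + inverse (real (Suc n))"
      proof (rule always_eventually, rule allI)
        fix n
        have "n \<le> R n" using seq_suble[OF R] .
        then have "1 / real (Suc (R n)) \<le> 1 / real (Suc n)" by (simp add: frac_le)
        then show "C (P (R n)) \<le> m + inverse (real (Suc n))" using CP[of "R n"] by (simp add: inverse_eq_divide)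
      qed
      show "(\<lambda>n. m) \<longlonglongrightarrow> m" by simp
      show "(\<lambda>n. m + inverse (real (Suc n))) \<longlonglongrightarrow> m"
        using tendsto_add[OF tendsto_const LIMSEQ_inverse_real_of_nat, of m] by simp
    qed
    moreover have "(\<lambda>n. C (P (R n))) \<longlonglongrightarrow> cost N T (xsf G)" unfolding C_def by (rule E.cost_conv)
    ultimately show ?thesis using LIMSEQ_unique by blast
  qed
  show ?thesis
  proof (intro exI conjI allI impI)
    show "admissible N T (asf N (\<lambda>n. P (R n)) G)" by (rule E.adm_s)
    show "is_traj N T \<xi>0 (asf N (\<lambda>n. P (R n)) G) (xsf G)" by (rule E.traj_s)
    fix \<beta> \<eta> assume "admissible N T \<beta> \<and> is_traj N T \<xi>0 \<beta> \<eta>"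
    then have "(\<beta>, \<eta>) \<in> Fs" by (simp add: Fs_def feas_def)
    then have "m \<le> C (\<beta>, \<eta>)" by (rule mle)
    then show "cost N T (xsf G) \<le> cost N T \<eta>" using cm by (simp add: C_def)
  qed
qed

theorem lemma2:
  fixes N :: nat and T :: real and \<xi>0 :: "nat \<Rightarrow> real"
  assumes "N \<ge> 1" and "T > 0"
    and "mean N \<xi>0 > 0"
    and "\<And>i j. i \<le> j \<Longrightarrow> j < N \<Longrightarrow> \<xi>0 j \<le> \<xi>0 i"
  shows "\<exists>\<alpha> \<xi>. admissible N T \<alpha> \<and> is_traj N T \<xi>0 \<alpha> \<xi> \<and>
           (\<forall>\<beta> \<eta>. admissible N T \<beta> \<and> is_traj N T \<xi>0 \<beta> \<eta> \<longrightarrow> cost N T \<xi> \<le> cost N T \<eta>) \<and>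
           (\<forall>t\<in>{0..T}. \<forall>i j. i < j \<and> j < N \<longrightarrow> \<xi> t j \<le> \<xi> t i)"
proof -
  obtain \<alpha> \<xi> where a: "admissible N T \<alpha>" and t: "is_traj N T \<xi>0 \<alpha> \<xi>"
    and opt: "\<forall>\<beta> \<eta>. admissible N T \<beta> \<and> is_traj N T \<xi>0 \<beta> \<eta> \<longrightarrow> cost N T \<xi> \<le> cost N T \<eta>"
    using exists_opt[OF assms(1-3)] by blast
  have "\<forall>t\<in>{0..T}. \<forall>i j. i < j \<and> j < N \<longrightarrow> \<xi> t j \<le> \<xi> t i"
    by (rule ordering_from_opt[OF assms a t opt])
  then show ?thesis using a t opt by blast
qed


end
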